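(* Let $\sigma$ be a Borel measure on $\mathbb{R}\setminus\{0\}$ whose support is invariant under $\beta\mapsto\beta^{-1}$ and on which $|\beta|$ and $|\beta|^{-1}$ are bounded, and let $\mu$ be the measure on $X=(\mathbb{R}\setminus\{0\})\cup\mathbb{T}$ (where $\mathbb{T}=\{|\beta|=1\}\subset\mathbb{C}$) equal to $\sigma$ on the real line and to $d\theta/\pi$ on $\mathbb{T}$ (parametrized by $e^{i\theta}$). Let $\rho$ be a function on $\operatorname{supp}\sigma\cup\mathbb{T}$ and $\hat r$ a function on $\mathbb{T}$, and let $s(\alpha)=1$ for $|\alpha|>1$, $s(\alpha)=-1$ for $|\alpha|<1$. Let $C_2$ be the operator on $H=L^2(X,\mu)$ given by $$(C_2u)(\beta)=\frac{\beta}{|\beta|}\,\rho(\beta)\,u(\beta^{-1})+\mathrm{v.p.}\int_{-\infty}^{\infty}\frac{u(\alpha)\,s(\alpha)}{1-\beta^{-1}\alpha^{-1}}\,d\sigma(\alpha)+\frac1\pi\,\mathrm{v.p.}\int_{-\pi}^{\pi}\frac{\hat r(e^{i\theta})\,u(e^{i\theta})}{1-\beta^{-1}e^{-i\theta}}\,d\theta,$$ and assume $C_2$ is a well-defined bounded operator on $H$. For $k\in\mathbb{Z}$, $t\in\mathbb{R}$ put $$\Gamma(k,t)=M_{\beta^{k+2}e^{\beta t}}+M_{\beta^{-k}e^{\beta^{-1}t}}\,C_2,$$ where $M_f$ denotes multiplication by the function $f(\beta)$, and assume that every $\Gamma(k,t)$ is invertible with bounded inverse. Let $\gamma(k,t)=\Gamma(k,t)^{-1}\partial_t\Gamma(k,t)$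 (derivatives in $t$ taken in operator norm). Then each $\gamma(k,t)$ is invertible and $$\partial_t\bigl(\gamma(k,t)^{-1}\partial_t\gamma(k,t)\bigr)=\gamma(k,t)^{-1}\gamma(k+1,t)-\gamma(k-1,t)^{-1}\gamma(k,t)\qquad\text{for all }k\in\mathbb{Z},\ t\in\mathbb{R}.$$
   Context: In the paper the measure $\sigma$ and the functions $\rho=m/(2q(\beta^{-1}))$ and $\hat r$ are the "reduced spectral data" of a Jacobi matrix, but the paper states explicitly that the considerations of this section hold for arbitrary such data provided the operators $\Gamma(k,t)$ are invertible; this is the generality stated here. "v.p." denotes the Cauchy principal value integral. *)

theory Defs
  imports "HOL-Analysis.Analysis"
begin

text \<open>X = (R minus 0) union T is viewed as a subset of the complex plane; functions on X
  are represented by functions complex => complex (values off X are irrelevant since mu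
  is concentrated on X). Operators on H are represented by maps on representatives.\<close>

definition supp_meas :: "real measure \<Rightarrow> real set" where
  "supp_meas \<sigma> = {x. \<forall>e>0. emeasure \<sigma> (ball x e) > 0}"

definition circle :: "complex set" where
  "circle = {z. cmod z = 1}"

definition mu_meas :: "real measure \<Rightarrow> complex measure" where
  "mu_meas \<sigma> = measure_of UNIV (sets borel)
     (\<lambda>A. emeasure \<sigma> (complex_of_real -` A)
          + emeasure lborel {\<theta> \<in> {-pi..pi}. cis \<theta> \<in> A} / ennreal pi)"

definition L2 :: "complex measure \<Rightarrow> (complex \<Rightarrow> complex) set" where
  "L2 \<mu> = {u. u \<in> borel_measurable \<mu> \<and> (\<integral>\<^sup>+ x. ennreal ((cmod (u x))\<^sup>2) \<partial>\<mu>) < \<infinity>}"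

definition l2n :: "complex measure \<Rightarrow> (complex \<Rightarrow> complex) \<Rightarrow> ennreal" where
  "l2n \<mu> u = (\<integral>\<^sup>+ x. ennreal ((cmod (u x))\<^sup>2) \<partial>\<mu>)"

type_synonym op = "(complex \<Rightarrow> complex) \<Rightarrow> (complex \<Rightarrow> complex)"

text \<open>A well-defined bounded (linear) operator on H: maps L^2 to L^2, linear modulo
  null sets, bounded. (Compatibility with a.e. equality follows from these.)\<close>
definition bounded_op :: "complex measure \<Rightarrow> op \<Rightarrow> bool" where
  "bounded_op \<mu> T \<longleftrightarrow>
     (\<forall>u\<in>L2 \<mu>. T u \<in> L2 \<mu>) \<and>
     (\<forall>u\<in>L2 \<mu>. \<forall>v\<in>L2 \<mu>. \<forall>c::complex.
        AE x in \<mu>. T (\<lambda>y. u y + c * v y) x = T u x + c * T v x) \<and>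
     (\<exists>K::ennreal. K < \<infinity> \<and> (\<forall>u\<in>L2 \<mu>. l2n \<mu> (T u) \<le> K * l2n \<mu> u))"

definition op_norm2 :: "complex measure \<Rightarrow> op \<Rightarrow> ennreal" where
  "op_norm2 \<mu> T = (SUP u\<in>{u\<in>L2 \<mu>. l2n \<mu> u \<le> 1}. l2n \<mu> (T u))"

definition op_comp :: "op \<Rightarrow> op \<Rightarrow> op" (infixl "\<circ>\<^sub>o" 55) where
  "op_comp S T = (\<lambda>u. S (T u))"

definition op_diff :: "op \<Rightarrow> op \<Rightarrow> op" where
  "op_diff S T = (\<lambda>u x. S u x - T u x)"

definition op_eq :: "complex measure \<Rightarrow> op \<Rightarrow> op \<Rightarrow> bool" where
  "op_eq \<mu> S T \<longleftrightarrow> (\<forall>u\<in>L2 \<mu>. AE x in \<mu>. S u x = T u x)"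

definition op_invertible :: "complex measure \<Rightarrow> op \<Rightarrow> bool" where
  "op_invertible \<mu> T \<longleftrightarrow> bounded_op \<mu> T \<and>
     (\<exists>S. bounded_op \<mu> S \<and> op_eq \<mu> (S \<circ>\<^sub>o T) id \<and> op_eq \<mu> (T \<circ>\<^sub>o S) id)"

definition op_inv :: "complex measure \<Rightarrow> op \<Rightarrow> op" where
  "op_inv \<mu> T = (SOME S. bounded_op \<mu> S \<and> op_eq \<mu> (S \<circ>\<^sub>o T) id \<and> op_eq \<mu> (T \<circ>\<^sub>o S) id)"

definition has_op_deriv :: "complex measure \<Rightarrow> (real \<Rightarrow> op) \<Rightarrow> op \<Rightarrow> real \<Rightarrow> bool" where
  "has_op_deriv \<mu> F D t \<longleftrightarrow> bounded_op \<mu> D \<and>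
     ((\<lambda>h. op_norm2 \<mu> (\<lambda>u x. (F (t + h) u x - F t u x) / complex_of_real h - D u x))
        \<longlongrightarrow> 0) (at 0)"

definition op_deriv :: "complex measure \<Rightarrow> (real \<Rightarrow> op) \<Rightarrow> real \<Rightarrow> op" where
  "op_deriv \<mu> F t = (SOME D. has_op_deriv \<mu> F D t)"

definition mult_op :: "(complex \<Rightarrow> complex) \<Rightarrow> op" where
  "mult_op f = (\<lambda>u x. f x * u x)"

definition vp1_trunc :: "real measure \<Rightarrow> (real \<Rightarrow> real) \<Rightarrow> (complex \<Rightarrow> complex) \<Rightarrow> complex \<Rightarrow> real \<Rightarrow> complex" where
  "vp1_trunc \<sigma> s u \<beta> \<epsilon> =
     (LINT \<alpha>:{\<alpha>. cmod (complex_of_real \<alpha> - 1 / \<beta>) > \<epsilon>}|\<sigma>.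
        u (complex_of_real \<alpha>) * complex_of_real (s \<alpha>) / (1 - 1 / (\<beta> * complex_of_real \<alpha>)))"

definition vp2_trunc :: "(complex \<Rightarrow> complex) \<Rightarrow> (complex \<Rightarrow> complex) \<Rightarrow> complex \<Rightarrow> real \<Rightarrow> complex" where
  "vp2_trunc rh u \<beta> \<epsilon> =
     (LINT \<theta>:{\<theta>\<in>{-pi..pi}. cmod (cis \<theta> - 1 / \<beta>) > \<epsilon>}|lborel.
        rh (cis \<theta>) * u (cis \<theta>) / (1 - 1 / (\<beta> * cis \<theta>)))"

definition vp_exists :: "real measure \<Rightarrow> (real \<Rightarrow> real) \<Rightarrow> (complex \<Rightarrow> complex) \<Rightarrow> (complex \<Rightarrow> complex) \<Rightarrow> complex \<Rightarrow> bool" where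
  "vp_exists \<sigma> s rh u \<beta> \<longleftrightarrow>
     (\<forall>\<^sub>F \<epsilon> in at_right 0.
        set_integrable \<sigma> {\<alpha>. cmod (complex_of_real \<alpha> - 1 / \<beta>) > \<epsilon>}
          (\<lambda>\<alpha>. u (complex_of_real \<alpha>) * complex_of_real (s \<alpha>) / (1 - 1 / (\<beta> * complex_of_real \<alpha>))) \<and>
        set_integrable lborel {\<theta>\<in>{-pi..pi}. cmod (cis \<theta> - 1 / \<beta>) > \<epsilon>}
          (\<lambda>\<theta>. rh (cis \<theta>) * u (cis \<theta>) / (1 - 1 / (\<beta> * cis \<theta>)))) \<and>
     (\<exists>L. (vp1_trunc \<sigma> s u \<beta> \<longlongrightarrow> L) (at_right 0)) \<and>
     (\<exists>L. (vp2_trunc rh u \<beta> \<longlongrightarrow> L) (at_right 0))"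

definition C2 :: "real measure \<Rightarrow> (real \<Rightarrow> real) \<Rightarrow> (complex \<Rightarrow> complex) \<Rightarrow> (complex \<Rightarrow> complex) \<Rightarrow> op" where
  "C2 \<sigma> s \<rho> rh u = (\<lambda>\<beta>.
      \<beta> / complex_of_real (cmod \<beta>) * \<rho> \<beta> * u (1 / \<beta>)
      + Lim (at_right 0) (vp1_trunc \<sigma> s u \<beta>)
      + 1 / complex_of_real pi * Lim (at_right 0) (vp2_trunc rh u \<beta>))"

definition Gam :: "real measure \<Rightarrow> (real \<Rightarrow> real) \<Rightarrow> (complex \<Rightarrow> complex) \<Rightarrow> (complex \<Rightarrow> complex) \<Rightarrow> int \<Rightarrow> real \<Rightarrow> op" where
  "Gam \<sigma> s \<rho> rh k t = (\<lambda>u x.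
      mult_op (\<lambda>\<beta>. \<beta> powi (k + 2) * exp (\<beta> * complex_of_real t)) u x
      + (mult_op (\<lambda>\<beta>. \<beta> powi (- k) * exp (complex_of_real t / \<beta>)) \<circ>\<^sub>o C2 \<sigma> s \<rho> rh) u x)"

definition gam :: "real measure \<Rightarrow> (real \<Rightarrow> real) \<Rightarrow> (complex \<Rightarrow> complex) \<Rightarrow> (complex \<Rightarrow> complex) \<Rightarrow> int \<Rightarrow> real \<Rightarrow> op" where
  "gam \<sigma> s \<rho> rh k t =
     op_inv (mu_meas \<sigma>) (Gam \<sigma> s \<rho> rh k t) \<circ>\<^sub>o op_deriv (mu_meas \<sigma>) (Gam \<sigma> s \<rho> rh k) t"

end

theory Submission
  imports Defs
begin

lemma sq_add_le: "((x::real) + y)^2 \<le> 2 * x^2 + 2 * y^2"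
proof -
  have "0 \<le> (x - y)^2" by simp
  thus ?thesis by (simp add: power2_eq_square algebra_simps)
qed

lemma cmod_add_sq: "(cmod (a + b))^2 \<le> 2 * (cmod a)^2 + 2 * (cmod b)^2"
proof -
  have "cmod (a+b) \<le> cmod a + cmod b" by (rule norm_triangle_ineq)
  hence "(cmod (a+b))^2 \<le> (cmod a + cmod b)^2" by (simp add: power_mono)
  also have "... \<le> 2 * (cmod a)^2 + 2 * (cmod b)^2" by (rule sq_add_le)
  finally show ?thesis .
qed

lemma L2_iff: "u \<in> L2 M \<longleftrightarrow> u \<in> borel_measurable M \<and> l2n M u < \<infinity>"
  by (simp add: L2_def l2n_def)

definition nl :: "complex measure \<Rightarrow> (complex \<Rightarrow> complex) \<Rightarrow> real" where
  "nl M u = enn2real (l2n M u)"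

lemma nl_nonneg[simp]: "0 \<le> nl M u" by (simp add: nl_def)

lemma l2n_nl: "u \<in> L2 M \<Longrightarrow> l2n M u = ennreal (nl M u)"
  by (simp add: L2_iff nl_def)

lemma L2_meas: "u \<in> L2 M \<Longrightarrow> u \<in> borel_measurable M" by (simp add: L2_iff)

lemma l2n_add_le:
  assumes "f \<in> borel_measurable M" "g \<in> borel_measurable M"
  shows "l2n M (\<lambda>x. f x + g x) \<le> 2 * l2n M f + 2 * l2n M g"
proof -
  have "l2n M (\<lambda>x. f x + g x) \<le> (\<integral>\<^sup>+ x. 2 * ennreal ((cmod (f x))\<^sup>2) + 2 * ennreal ((cmod (g x))\<^sup>2) \<partial>M)"
    unfolding l2n_def
  proof (rule nn_integral_mono)
    fix x
    have "ennreal ((cmod (f x + g x))\<^sup>2) \<le> ennreal (2 * (cmod (f x))^2 + 2 * (cmod (g x))^2)"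
      using cmod_add_sq by (rule ennreal_leI)
    also have "\<dots> = 2 * ennreal ((cmod (f x))\<^sup>2) + 2 * ennreal ((cmod (g x))\<^sup>2)"
      by (simp add: ennreal_plus ennreal_mult)
    finally show "ennreal ((cmod (f x + g x))\<^sup>2) \<le> 2 * ennreal ((cmod (f x))\<^sup>2) + 2 * ennreal ((cmod (g x))\<^sup>2)" .
  qed
  also have "\<dots> = 2 * l2n M f + 2 * l2n M g"
    unfolding l2n_def using assms
    by (subst nn_integral_add) (auto simp: nn_integral_cmult)
  finally show ?thesis .
qed

lemma l2n_cmult:
  assumes "f \<in> borel_measurable M"
  shows "l2n M (\<lambda>x. c * f x) = ennreal ((cmod c)^2) * l2n M f"
proof -
  have "l2n M (\<lambda>x. c * f x) = (\<integral>\<^sup>+ x. ennreal ((cmod c)^2) * ennreal ((cmod (f x))\<^sup>2) \<partial>M)"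
    unfolding l2n_def by (simp add: norm_mult power_mult_distrib ennreal_mult)
  also have "\<dots> = ennreal ((cmod c)^2) * l2n M f"
    unfolding l2n_def using assms by (subst nn_integral_cmult) auto
  finally show ?thesis .
qed

lemma l2n_cong_AE: "(AE x in M. f x = g x) \<Longrightarrow> l2n M f = l2n M g"
  unfolding l2n_def by (rule nn_integral_cong_AE) auto

lemma nl_cong_AE: "(AE x in M. f x = g x) \<Longrightarrow> nl M f = nl M g"
  unfolding nl_def using l2n_cong_AE by metis

lemma L2_lin:
  assumes "u \<in> L2 M" "v \<in> L2 M"
  shows "(\<lambda>x. u x + c * v x) \<in> L2 M"
proof -
  have m: "u \<in> borel_measurable M" "v \<in> borel_measurable M" using assms by (auto simp: L2_iff)
  hence m2: "(\<lambda>x. c * v x) \<in> borel_measurable M" by measurable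
  have "l2n M (\<lambda>x. u x + c * v x) \<le> 2 * l2n M u + 2 * l2n M (\<lambda>x. c * v x)"
    by (rule l2n_add_le[OF m(1) m2])
  also have "\<dots> < \<infinity>" using assms m by (auto simp: L2_iff l2n_cmult ennreal_mult_less_top)
  finally show ?thesis using m m2 by (auto simp: L2_iff)
qed

lemma L2_zero: "(\<lambda>x. 0) \<in> L2 M" by (simp add: L2_iff l2n_def)

lemma L2_scale: "u \<in> L2 M \<Longrightarrow> (\<lambda>x. c * u x) \<in> L2 M"
  using L2_lin[OF L2_zero, of u M c] by simp

lemma L2_add: "u \<in> L2 M \<Longrightarrow> v \<in> L2 M \<Longrightarrow> (\<lambda>x. u x + v x) \<in> L2 M"
  using L2_lin[of u M v 1] by simp

lemma L2_diff: "u \<in> L2 M \<Longrightarrow> v \<in> L2 M \<Longrightarrow> (\<lambda>x. u x - v x) \<in> L2 M"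
  using L2_lin[of u M v "-1"] by simp

lemma nl_add_le: "f \<in> L2 M \<Longrightarrow> g \<in> L2 M \<Longrightarrow> nl M (\<lambda>x. f x + g x) \<le> 2 * nl M f + 2 * nl M g"
proof -
  assume a: "f \<in> L2 M" "g \<in> L2 M"
  have "ennreal (nl M (\<lambda>x. f x + g x)) \<le> ennreal (2 * nl M f + 2 * nl M g)"
    using l2n_add_le[OF L2_meas[OF a(1)] L2_meas[OF a(2)]] a L2_add[OF a]
    by (simp add: l2n_nl ennreal_plus ennreal_mult)
  moreover have "0 \<le> 2 * nl M f + 2 * nl M g" by simp
  ultimately show ?thesis by (subst (asm) ennreal_le_iff) auto
qed

lemma nl_cmult: "f \<in> L2 M \<Longrightarrow> nl M (\<lambda>x. c * f x) = (cmod c)^2 * nl M f"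
  by (simp add: nl_def l2n_cmult L2_meas enn2real_mult)

lemma nl_zero_AE: assumes "f \<in> L2 M" "nl M f = 0" shows "AE x in M. f x = 0"
proof -
  have "l2n M f = 0" using assms by (simp add: l2n_nl)
  hence "AE x in M. ennreal ((cmod (f x))\<^sup>2) = 0"
    unfolding l2n_def using L2_meas[OF assms(1)] by (subst (asm) nn_integral_0_iff_AE) auto
  thus ?thesis by eventually_elim simp
qed

lemma nl_AE_zero: "(AE x in M. f x = 0) \<Longrightarrow> nl M f = 0"
proof -
  assume "AE x in M. f x = 0"
  hence "nl M f = nl M (\<lambda>x. 0)" by (rule nl_cong_AE)
  thus ?thesis by (simp add: nl_def l2n_def)
qed

lemma bo_L2: "bounded_op M T \<Longrightarrow> u \<in> L2 M \<Longrightarrow> T u \<in> L2 M"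
  by (simp add: bounded_op_def)

lemma bo_lin: "bounded_op M T \<Longrightarrow> u \<in> L2 M \<Longrightarrow> v \<in> L2 M \<Longrightarrow>
   AE x in M. T (\<lambda>y. u y + c * v y) x = T u x + c * T v x"
  by (simp add: bounded_op_def)

lemma bo_bound: assumes "bounded_op M T" shows "\<exists>K\<ge>0. \<forall>u\<in>L2 M. nl M (T u) \<le> K * nl M u"
proof -
  obtain K where K: "K < \<infinity>" "\<forall>u\<in>L2 M. l2n M (T u) \<le> K * l2n M u"
    using assms by (auto simp: bounded_op_def)
  have "\<forall>u\<in>L2 M. nl M (T u) \<le> enn2real K * nl M u"
  proof
    fix u assume u: "u \<in> L2 M"
    have "l2n M (T u) \<le> K * l2n M u" using K u by auto
    hence "enn2real (l2n M (T u)) \<le> enn2real (K * l2n M u)"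
      using K u by (intro enn2real_mono) (auto simp: L2_iff ennreal_mult_less_top)
    thus "nl M (T u) \<le> enn2real K * nl M u" by (simp add: nl_def enn2real_mult)
  qed
  thus ?thesis by (intro exI[of _ "enn2real K"]) auto
qed

lemma bo_zero: assumes "bounded_op M T" shows "AE x in M. T (\<lambda>y. 0) x = 0"
proof -
  obtain K where "\<forall>u\<in>L2 M. nl M (T u) \<le> K * nl M u" using bo_bound[OF assms] by auto
  hence "nl M (T (\<lambda>y. 0)) \<le> K * nl M (\<lambda>y. 0)" using L2_zero by auto
  moreover have "nl M (\<lambda>y. 0) = 0" by (simp add: nl_def l2n_def)
  ultimately have "nl M (T (\<lambda>y. 0)) = 0" using nl_nonneg[of M "T (\<lambda>y. 0)"] by simp
  thus ?thesis using nl_zero_AE bo_L2[OF assms L2_zero] by blast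
qed

lemma bo_scale: assumes "bounded_op M T" "u \<in> L2 M"
  shows "AE x in M. T (\<lambda>y. c * u y) x = c * T u x"
  using bo_lin[OF assms(1) L2_zero assms(2), of c] bo_zero[OF assms(1)]
  by eventually_elim simp

lemma bo_add: assumes "bounded_op M T" "u \<in> L2 M" "v \<in> L2 M"
  shows "AE x in M. T (\<lambda>y. u y + v y) x = T u x + T v x"
  using bo_lin[OF assms, of 1] by simp

lemma bo_diff: assumes "bounded_op M T" "u \<in> L2 M" "v \<in> L2 M"
  shows "AE x in M. T (\<lambda>y. u y - v y) x = T u x - T v x"
  using bo_lin[OF assms, of "-1"] by simp

lemma bo_resp: assumes "bounded_op M T" "u \<in> L2 M" "v \<in> L2 M" "AE x in M. u x = v x"
  shows "AE x in M. T u x = T v x"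
proof -
  obtain K where K: "\<forall>u\<in>L2 M. nl M (T u) \<le> K * nl M u" using bo_bound[OF assms(1)] by auto
  have w: "(\<lambda>y. u y - v y) \<in> L2 M" using L2_diff assms by blast
  have "nl M (\<lambda>y. u y - v y) = 0" using assms(4) by (intro nl_AE_zero) auto
  hence "nl M (T (\<lambda>y. u y - v y)) \<le> 0" using K w by (metis mult_zero_right)
  hence "nl M (T (\<lambda>y. u y - v y)) = 0" using nl_nonneg[of M "T (\<lambda>y. u y - v y)"] by linarith
  hence "AE x in M. T (\<lambda>y. u y - v y) x = 0" using nl_zero_AE bo_L2[OF assms(1) w] by blast
  thus ?thesis using bo_diff[OF assms(1-3)] by eventually_elim simp
qed

definition nrm :: "complex measure \<Rightarrow> op \<Rightarrow> real" where
  "nrm M T = enn2real (op_norm2 M T)"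

lemma nrm_nonneg[simp]: "0 \<le> nrm M T" by (simp add: nrm_def)

lemma op_norm2_le: "(\<And>u. u \<in> L2 M \<Longrightarrow> l2n M u \<le> 1 \<Longrightarrow> l2n M (T u) \<le> K) \<Longrightarrow> op_norm2 M T \<le> K"
  unfolding op_norm2_def by (rule SUP_least) auto

lemma op_norm2_le_real:
  assumes "\<And>u. u \<in> L2 M \<Longrightarrow> T u \<in> L2 M" "0 \<le> K" "\<And>u. u \<in> L2 M \<Longrightarrow> nl M (T u) \<le> K * nl M u"
  shows "op_norm2 M T \<le> ennreal K"
proof (rule op_norm2_le)
  fix u assume u: "u \<in> L2 M" "l2n M u \<le> 1"
  hence "nl M u \<le> 1" by (simp add: l2n_nl)
  hence "K * nl M u \<le> K" using assms(2) by (simp add: mult_left_le)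
  hence "nl M (T u) \<le> K" using assms(3)[OF u(1)] by linarith
  hence "ennreal (nl M (T u)) \<le> ennreal K" by (rule ennreal_leI)
  thus "l2n M (T u) \<le> ennreal K" using l2n_nl[OF assms(1)[OF u(1)]] by simp
qed

lemma nrm_le:
  assumes "\<And>u. u \<in> L2 M \<Longrightarrow> T u \<in> L2 M" "0 \<le> K" "\<And>u. u \<in> L2 M \<Longrightarrow> nl M (T u) \<le> K * nl M u"
  shows "nrm M T \<le> K"
proof -
  have "op_norm2 M T \<le> ennreal K" by (rule op_norm2_le_real[OF assms])
  hence "enn2real (op_norm2 M T) \<le> enn2real (ennreal K)" by (intro enn2real_mono) auto
  thus ?thesis using assms(2) by (simp add: nrm_def)
qed

lemma op_norm2_fin: assumes "bounded_op M T" shows "op_norm2 M T = ennreal (nrm M T)"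
proof -
  obtain K where "K \<ge> 0" "\<forall>u\<in>L2 M. nl M (T u) \<le> K * nl M u" using bo_bound[OF assms] by auto
  hence "op_norm2 M T \<le> ennreal K" using bo_L2[OF assms] by (intro op_norm2_le_real) auto
  hence "op_norm2 M T < \<infinity>" using ennreal_less_top[of K] by (simp add: order.strict_trans1)
  thus ?thesis by (simp add: nrm_def)
qed

lemma nrm_bound: assumes "bounded_op M T" "u \<in> L2 M" shows "nl M (T u) \<le> nrm M T * nl M u"
proof (cases "nl M u = 0")
  case True
  hence "AE x in M. u x = 0" using nl_zero_AE assms(2) by blast
  hence "AE x in M. T u x = T (\<lambda>y. 0) x" using bo_resp[OF assms(1) assms(2) L2_zero] by auto
  hence "AE x in M. T u x = 0" using bo_zero[OF assms(1)] by eventually_elim simp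
  hence "nl M (T u) = 0" by (rule nl_AE_zero)
  thus ?thesis using True by simp
next
  case False
  define r where "r = nl M u"
  have r: "r > 0" using False nl_nonneg[of M u] r_def by linarith
  define c where "c = complex_of_real (1 / sqrt r)"
  define v where "v = (\<lambda>x. c * u x)"
  have v: "v \<in> L2 M" unfolding v_def using L2_scale assms(2) by blast
  have cm0: "cmod c = 1 / sqrt r" using r unfolding c_def norm_of_real by simp
  have cm: "(cmod c)^2 = 1 / r" using r by (simp add: cm0 power_divide)
  have "nl M v = 1" unfolding v_def using nl_cmult[OF assms(2)] cm r r_def by simp
  hence "l2n M v \<le> 1" using v by (simp add: l2n_nl)
  hence "l2n M (T v) \<le> op_norm2 M T" unfolding op_norm2_def using v by (intro SUP_upper) auto
  hence "ennreal (nl M (T v)) \<le> ennreal (nrm M T)"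
    using bo_L2[OF assms(1) v] op_norm2_fin[OF assms(1)] by (simp add: l2n_nl)
  hence A: "nl M (T v) \<le> nrm M T" by (simp add: ennreal_le_iff)
  have "AE x in M. T v x = c * T u x" unfolding v_def by (rule bo_scale[OF assms])
  hence "nl M (T v) = nl M (\<lambda>x. c * T u x)" by (rule nl_cong_AE)
  also have "\<dots> = nl M (T u) / r" using nl_cmult[OF bo_L2[OF assms]] cm by simp
  finally have "nl M (T u) / r \<le> nrm M T" using A by simp
  thus ?thesis using r r_def by (simp add: divide_le_eq mult.commute)
qed

lemma bo_intro:
  assumes "\<And>u. u \<in> L2 M \<Longrightarrow> T u \<in> L2 M"
    "\<And>u v c. u \<in> L2 M \<Longrightarrow> v \<in> L2 M \<Longrightarrow> AE x in M. T (\<lambda>y. u y + c * v y) x = T u x + c * T v x"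
    "0 \<le> K" "\<And>u. u \<in> L2 M \<Longrightarrow> nl M (T u) \<le> K * nl M u"
  shows "bounded_op M T"
  unfolding bounded_op_def
proof (intro conjI ballI allI exI[of _ "ennreal K"])
  show "ennreal K < \<infinity>" by simp
  fix u assume u: "u \<in> L2 M"
  show "T u \<in> L2 M" using assms(1) u .
  show "l2n M (T u) \<le> ennreal K * l2n M u"
    using assms(1,3,4) u by (simp add: l2n_nl ennreal_mult[symmetric] ennreal_leI)
next
  fix u v c assume "u \<in> L2 M" "v \<in> L2 M"
  thus "AE x in M. T (\<lambda>y. u y + c * v y) x = T u x + c * T v x" using assms(2) by blast
qed

lemma bo_id: "bounded_op M id"
  by (rule bo_intro[where K=1]) auto

lemma bo_comb:
  assumes S: "bounded_op M S" and T: "bounded_op M T"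
  shows "bounded_op M (\<lambda>u x. a * S u x + b * T u x)"
proof (rule bo_intro[where K="2 * (cmod a)^2 * nrm M S + 2 * (cmod b)^2 * nrm M T"])
  fix u assume u: "u \<in> L2 M"
  have su: "S u \<in> L2 M" and tu: "T u \<in> L2 M" using bo_L2 S T u by auto
  show "(\<lambda>x. a * S u x + b * T u x) \<in> L2 M"
    using L2_add[OF L2_scale[OF su] L2_scale[OF tu]] by simp
  have "nl M (\<lambda>x. a * S u x + b * T u x) \<le> 2 * nl M (\<lambda>x. a * S u x) + 2 * nl M (\<lambda>x. b * T u x)"
    using nl_add_le[OF L2_scale[OF su] L2_scale[OF tu]] by simp
  also have "\<dots> = 2 * (cmod a)^2 * nl M (S u) + 2 * (cmod b)^2 * nl M (T u)"
    using nl_cmult su tu by simp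
  also have "\<dots> \<le> 2 * (cmod a)^2 * (nrm M S * nl M u) + 2 * (cmod b)^2 * (nrm M T * nl M u)"
    using nrm_bound[OF S u] nrm_bound[OF T u]
    by (intro add_mono mult_left_mono) auto
  finally show "nl M (\<lambda>x. a * S u x + b * T u x) \<le> (2 * (cmod a)^2 * nrm M S + 2 * (cmod b)^2 * nrm M T) * nl M u"
    by (simp add: algebra_simps)
next
  fix u v c assume u: "u \<in> L2 M" and v: "v \<in> L2 M"
  show "AE x in M. a * S (\<lambda>y. u y + c * v y) x + b * T (\<lambda>y. u y + c * v y) x =
          a * S u x + b * T u x + c * (a * S v x + b * T v x)"
    using bo_lin[OF S u v, of c] bo_lin[OF T u v, of c]
    by eventually_elim (simp add: algebra_simps)
qed simp

lemma bo_comp: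
  assumes S: "bounded_op M S" and T: "bounded_op M T"
  shows "bounded_op M (S \<circ>\<^sub>o T)"
proof (rule bo_intro[where K="nrm M S * nrm M T"])
  fix u assume u: "u \<in> L2 M"
  show "(S \<circ>\<^sub>o T) u \<in> L2 M" unfolding op_comp_def by (rule bo_L2[OF S bo_L2[OF T u]])
  have "nl M (S (T u)) \<le> nrm M S * nl M (T u)" using nrm_bound[OF S bo_L2[OF T u]] .
  also have "\<dots> \<le> nrm M S * (nrm M T * nl M u)" using nrm_bound[OF T u] by (intro mult_left_mono) auto
  finally show "nl M ((S \<circ>\<^sub>o T) u) \<le> nrm M S * nrm M T * nl M u" by (simp add: op_comp_def mult.assoc)
next
  fix u v c assume u: "u \<in> L2 M" and v: "v \<in> L2 M"
  have tu: "T u \<in> L2 M" and tv: "T v \<in> L2 M" using bo_L2 T u v by auto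
  have "AE x in M. S (T (\<lambda>y. u y + c * v y)) x = S (\<lambda>y. T u y + c * T v y) x"
    by (rule bo_resp[OF S bo_L2[OF T L2_lin[OF u v]] L2_lin[OF tu tv] bo_lin[OF T u v]])
  thus "AE x in M. (S \<circ>\<^sub>o T) (\<lambda>y. u y + c * v y) x = (S \<circ>\<^sub>o T) u x + c * (S \<circ>\<^sub>o T) v x"
    using bo_lin[OF S tu tv, of c] unfolding op_comp_def by eventually_elim simp
qed (simp add: mult_nonneg_nonneg)

lemma op_eq_refl[simp]: "op_eq M T T" by (simp add: op_eq_def)
lemma op_eq_D: "op_eq M S T \<Longrightarrow> u \<in> L2 M \<Longrightarrow> AE x in M. S u x = T u x"
  by (simp add: op_eq_def)
lemma op_eq_sym: "op_eq M S T \<Longrightarrow> op_eq M T S"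
  unfolding op_eq_def by (auto elim: AE_mp)
lemma op_eq_trans[trans]: assumes "op_eq M S T" "op_eq M T U" shows "op_eq M S U"
  unfolding op_eq_def
proof
  fix u assume u: "u \<in> L2 M"
  show "AE x in M. S u x = U u x" using op_eq_D[OF assms(1) u] op_eq_D[OF assms(2) u] by eventually_elim simp
qed

lemma op_eq_comp_left: "op_eq M S S' \<Longrightarrow> (\<And>u. u \<in> L2 M \<Longrightarrow> T u \<in> L2 M) \<Longrightarrow> op_eq M (S \<circ>\<^sub>o T) (S' \<circ>\<^sub>o T)"
  by (simp add: op_eq_def op_comp_def)

lemma op_eq_comp_right:
  assumes "bounded_op M S" "bounded_op M T" "bounded_op M T'" "op_eq M T T'"
  shows "op_eq M (S \<circ>\<^sub>o T) (S \<circ>\<^sub>o T')"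
  unfolding op_eq_def op_comp_def
  using assms bo_resp bo_L2 op_eq_D by blast

lemma op_eq_comp:
  assumes "bounded_op M S" "bounded_op M S'" "bounded_op M T" "bounded_op M T'"
    "op_eq M S S'" "op_eq M T T'"
  shows "op_eq M (S \<circ>\<^sub>o T) (S' \<circ>\<^sub>o T')"
proof -
  have "op_eq M (S \<circ>\<^sub>o T) (S \<circ>\<^sub>o T')" using op_eq_comp_right assms by blast
  also have "op_eq M (S \<circ>\<^sub>o T') (S' \<circ>\<^sub>o T')" using op_eq_comp_left assms bo_L2 by blast
  finally show ?thesis .
qed

definition op_add :: "op \<Rightarrow> op \<Rightarrow> op" where
  "op_add S T = (\<lambda>u x. S u x + T u x)"
definition op_neg :: "op \<Rightarrow> op" where
  "op_neg T = (\<lambda>u x. - T u x)"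
definition op_scale :: "complex \<Rightarrow> op \<Rightarrow> op" where
  "op_scale c T = (\<lambda>u x. c * T u x)"

lemma op_eq_diff: assumes "op_eq M S S'" "op_eq M T T'" shows "op_eq M (op_diff S T) (op_diff S' T')"
  unfolding op_eq_def
proof
  fix u assume u: "u \<in> L2 M"
  show "AE x in M. op_diff S T u x = op_diff S' T' u x" using op_eq_D[OF assms(1) u] op_eq_D[OF assms(2) u]
    by eventually_elim (simp add: op_diff_def)
qed
lemma op_eq_add: assumes "op_eq M S S'" "op_eq M T T'" shows "op_eq M (op_add S T) (op_add S' T')"
  unfolding op_eq_def
proof
  fix u assume u: "u \<in> L2 M"
  show "AE x in M. op_add S T u x = op_add S' T' u x" using op_eq_D[OF assms(1) u] op_eq_D[OF assms(2) u]
    by eventually_elim (simp add: op_add_def)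
qed
lemma op_eq_neg: assumes "op_eq M S S'" shows "op_eq M (op_neg S) (op_neg S')"
  unfolding op_eq_def
proof
  fix u assume u: "u \<in> L2 M"
  show "AE x in M. op_neg S u x = op_neg S' u x" using op_eq_D[OF assms(1) u]
    by eventually_elim (simp add: op_neg_def)
qed

lemma comp_assoc: "(S \<circ>\<^sub>o T) \<circ>\<^sub>o U = S \<circ>\<^sub>o (T \<circ>\<^sub>o U)" by (simp add: op_comp_def)
lemma comp_id1[simp]: "S \<circ>\<^sub>o id = S" by (simp add: op_comp_def fun_eq_iff)
lemma comp_id2[simp]: "id \<circ>\<^sub>o S = S" by (simp add: op_comp_def fun_eq_iff)
lemma diff_comp: "op_diff T U \<circ>\<^sub>o S = op_diff (T \<circ>\<^sub>o S) (U \<circ>\<^sub>o S)" by (simp add: op_comp_def op_diff_def)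
lemma add_comp: "op_add T U \<circ>\<^sub>o S = op_add (T \<circ>\<^sub>o S) (U \<circ>\<^sub>o S)" by (simp add: op_comp_def op_add_def)
lemma neg_comp: "op_neg T \<circ>\<^sub>o S = op_neg (T \<circ>\<^sub>o S)" by (simp add: op_comp_def op_neg_def)

lemma comp_diff:
  assumes "bounded_op M S" "bounded_op M T" "bounded_op M U"
  shows "op_eq M (S \<circ>\<^sub>o op_diff T U) (op_diff (S \<circ>\<^sub>o T) (S \<circ>\<^sub>o U))"
  unfolding op_eq_def op_comp_def op_diff_def using bo_diff bo_L2 assms by blast
lemma comp_add:
  assumes "bounded_op M S" "bounded_op M T" "bounded_op M U"
  shows "op_eq M (S \<circ>\<^sub>o op_add T U) (op_add (S \<circ>\<^sub>o T) (S \<circ>\<^sub>o U))"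
  unfolding op_eq_def op_comp_def op_add_def using bo_add bo_L2 assms by blast
lemma comp_neg:
  assumes "bounded_op M S" "bounded_op M T"
  shows "op_eq M (S \<circ>\<^sub>o op_neg T) (op_neg (S \<circ>\<^sub>o T))"
  unfolding op_eq_def op_comp_def op_neg_def
proof
  fix u assume u: "u \<in> L2 M"
  show "AE x in M. S (\<lambda>x. - T u x) x = - S (T u) x"
    using bo_scale[OF assms(1) bo_L2[OF assms(2) u], of "-1"] by simp
qed

lemma bo_diff_op: "bounded_op M S \<Longrightarrow> bounded_op M T \<Longrightarrow> bounded_op M (op_diff S T)"
  using bo_comb[of M S T 1 "-1"] by (simp add: op_diff_def)
lemma bo_add_op: "bounded_op M S \<Longrightarrow> bounded_op M T \<Longrightarrow> bounded_op M (op_add S T)"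
  using bo_comb[of M S T 1 1] by (simp add: op_add_def)
lemma bo_scale_op: "bounded_op M T \<Longrightarrow> bounded_op M (op_scale c T)"
  using bo_comb[of M T T c 0] by (simp add: op_scale_def)
lemma bo_neg_op: "bounded_op M T \<Longrightarrow> bounded_op M (op_neg T)"
  using bo_comb[of M T T "-1" 0] by (simp add: op_neg_def)

lemma op_norm2_cong: assumes "op_eq M S T" shows "op_norm2 M S = op_norm2 M T"
  unfolding op_norm2_def
proof (rule SUP_cong)
  fix u assume "u \<in> {u \<in> L2 M. l2n M u \<le> 1}"
  thus "l2n M (S u) = l2n M (T u)" using assms by (intro l2n_cong_AE) (auto simp: op_eq_def)
qed simp

lemma nrm_cong: "op_eq M S T \<Longrightarrow> nrm M S = nrm M T"
  by (simp add: nrm_def op_norm2_cong)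

lemma nrm_zero_op_eq:
  assumes "bounded_op M S" "bounded_op M T" "nrm M (op_diff S T) = 0"
  shows "op_eq M S T"
  unfolding op_eq_def
proof
  fix u assume u: "u \<in> L2 M"
  have b: "bounded_op M (op_diff S T)" using bo_diff_op assms by blast
  have "nl M (op_diff S T u) \<le> 0" using nrm_bound[OF b u] assms(3) by simp
  hence "nl M (op_diff S T u) = 0" using nl_nonneg[of M "op_diff S T u"] by linarith
  hence "AE x in M. op_diff S T u x = 0" using nl_zero_AE bo_L2[OF b u] by blast
  thus "AE x in M. S u x = T u x" by eventually_elim (simp add: op_diff_def)
qed

lemma nrm_comb_le:
  assumes S: "bounded_op M S" and T: "bounded_op M T"
  shows "nrm M (\<lambda>u x. a * S u x + b * T u x) \<le> 2 * (cmod a)^2 * nrm M S + 2 * (cmod b)^2 * nrm M T"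
proof (rule nrm_le)
  fix u assume u: "u \<in> L2 M"
  show "(\<lambda>x. a * S u x + b * T u x) \<in> L2 M" using bo_L2[OF bo_comb[OF S T] u] by simp
  have su: "S u \<in> L2 M" and tu: "T u \<in> L2 M" using bo_L2 S T u by auto
  have "nl M (\<lambda>x. a * S u x + b * T u x) \<le> 2 * nl M (\<lambda>x. a * S u x) + 2 * nl M (\<lambda>x. b * T u x)"
    using nl_add_le[OF L2_scale[OF su] L2_scale[OF tu]] by simp
  also have "\<dots> = 2 * (cmod a)^2 * nl M (S u) + 2 * (cmod b)^2 * nl M (T u)"
    using nl_cmult su tu by simp
  also have "\<dots> \<le> 2 * (cmod a)^2 * (nrm M S * nl M u) + 2 * (cmod b)^2 * (nrm M T * nl M u)"
    using nrm_bound[OF S u] nrm_bound[OF T u]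
    by (intro add_mono mult_left_mono) auto
  finally show "nl M (\<lambda>x. a * S u x + b * T u x) \<le> (2 * (cmod a)^2 * nrm M S + 2 * (cmod b)^2 * nrm M T) * nl M u"
    by (simp add: algebra_simps)
qed simp

lemma nrm_diff_le: "bounded_op M S \<Longrightarrow> bounded_op M T \<Longrightarrow> nrm M (op_diff S T) \<le> 2 * nrm M S + 2 * nrm M T"
  using nrm_comb_le[of M S T 1 "-1"] by (simp add: op_diff_def)
lemma nrm_add_le: "bounded_op M S \<Longrightarrow> bounded_op M T \<Longrightarrow> nrm M (op_add S T) \<le> 2 * nrm M S + 2 * nrm M T"
  using nrm_comb_le[of M S T 1 1] by (simp add: op_add_def)

lemma nrm_comp_le: assumes S: "bounded_op M S" and T: "bounded_op M T"
  shows "nrm M (S \<circ>\<^sub>o T) \<le> nrm M S * nrm M T"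
proof (rule nrm_le)
  fix u assume u: "u \<in> L2 M"
  show "(S \<circ>\<^sub>o T) u \<in> L2 M" using bo_L2[OF bo_comp[OF S T] u] .
  have "nl M (S (T u)) \<le> nrm M S * nl M (T u)" using nrm_bound[OF S bo_L2[OF T u]] .
  also have "\<dots> \<le> nrm M S * (nrm M T * nl M u)" using nrm_bound[OF T u] by (intro mult_left_mono) auto
  finally show "nl M ((S \<circ>\<^sub>o T) u) \<le> nrm M S * nrm M T * nl M u" by (simp add: op_comp_def mult.assoc)
qed simp

lemma inv_props:
  assumes "op_invertible M T"
  shows "bounded_op M (op_inv M T)" "op_eq M (op_inv M T \<circ>\<^sub>o T) id" "op_eq M (T \<circ>\<^sub>o op_inv M T) id"
proof -
  have "\<exists>S. bounded_op M S \<and> op_eq M (S \<circ>\<^sub>o T) id \<and> op_eq M (T \<circ>\<^sub>o S) id"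
    using assms by (simp add: op_invertible_def)
  hence "bounded_op M (op_inv M T) \<and> op_eq M (op_inv M T \<circ>\<^sub>o T) id \<and> op_eq M (T \<circ>\<^sub>o op_inv M T) id"
    unfolding op_inv_def by (rule someI_ex)
  thus "bounded_op M (op_inv M T)" "op_eq M (op_inv M T \<circ>\<^sub>o T) id" "op_eq M (T \<circ>\<^sub>o op_inv M T) id" by auto
qed

lemma inv_bo: "op_invertible M T \<Longrightarrow> bounded_op M T" by (simp add: op_invertible_def)

lemma inv_left_AE: "op_invertible M T \<Longrightarrow> u \<in> L2 M \<Longrightarrow> AE x in M. op_inv M T (T u) x = u x"
  using op_eq_D[OF inv_props(2)] by (fastforce simp: op_comp_def)
lemma inv_right_AE: "op_invertible M T \<Longrightarrow> u \<in> L2 M \<Longrightarrow> AE x in M. T (op_inv M T u) x = u x"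
  using op_eq_D[OF inv_props(3)] by (fastforce simp: op_comp_def)

lemma inv_unique:
  assumes T: "op_invertible M T" and S: "bounded_op M S" and ST: "op_eq M (S \<circ>\<^sub>o T) id"
  shows "op_eq M (op_inv M T) S"
proof -
  note Ti = inv_props[OF T]
  have "op_eq M (op_inv M T) ((S \<circ>\<^sub>o T) \<circ>\<^sub>o op_inv M T)"
    using op_eq_comp_left[OF op_eq_sym[OF ST], of "op_inv M T"] bo_L2[OF Ti(1)] by simp
  also have "(S \<circ>\<^sub>o T) \<circ>\<^sub>o op_inv M T = S \<circ>\<^sub>o (T \<circ>\<^sub>o op_inv M T)" by (rule comp_assoc)
  also have "op_eq M (S \<circ>\<^sub>o (T \<circ>\<^sub>o op_inv M T)) (S \<circ>\<^sub>o id)"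
    by (rule op_eq_comp_right[OF S bo_comp[OF inv_bo[OF T] Ti(1)] bo_id Ti(3)])
  finally show ?thesis by simp
qed

lemma invertible_intro:
  "bounded_op M T \<Longrightarrow> bounded_op M S \<Longrightarrow> op_eq M (S \<circ>\<^sub>o T) id \<Longrightarrow> op_eq M (T \<circ>\<^sub>o S) id \<Longrightarrow> op_invertible M T"
  unfolding op_invertible_def by blast

definition dq :: "(real \<Rightarrow> op) \<Rightarrow> real \<Rightarrow> real \<Rightarrow> op \<Rightarrow> op" where
  "dq F t h D = (\<lambda>u x. (F (t + h) u x - F t u x) / complex_of_real h - D u x)"

lemma hod_iff: "has_op_deriv M F D t \<longleftrightarrow> bounded_op M D \<and> ((\<lambda>h. op_norm2 M (dq F t h D)) \<longlongrightarrow> 0) (at 0)"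
  by (simp add: has_op_deriv_def dq_def)

lemma bo_dq:
  assumes a: "bounded_op M (F (t+h))" and b: "bounded_op M (F t)" and c: "bounded_op M D"
  shows "bounded_op M (dq F t h D)"
proof -
  have "bounded_op M (\<lambda>u x. (1 / complex_of_real h) * op_diff (F (t+h)) (F t) u x + (-1) * D u x)"
    by (intro bo_comb bo_diff_op a b c)
  moreover have "(\<lambda>u x. (1 / complex_of_real h) * op_diff (F (t+h)) (F t) u x + (-1) * D u x) = dq F t h D"
    by (simp add: dq_def op_diff_def fun_eq_iff divide_inverse mult.commute)
  ultimately show ?thesis by simp
qed

lemma ev_ne0: "eventually (\<lambda>h. h \<noteq> 0) (at (0::real))"
  by (simp add: eventually_at_filter)

lemma sandwich0:
  fixes f g :: "real \<Rightarrow> real"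
  assumes "\<And>h. 0 \<le> f h" "\<And>h. h \<noteq> 0 \<Longrightarrow> f h \<le> g h" "(g \<longlongrightarrow> 0) (at 0)"
  shows "(f \<longlongrightarrow> 0) (at 0)"
proof (rule tendsto_sandwich[where f="\<lambda>_. 0" and h=g])
  show "eventually (\<lambda>n. 0 \<le> f n) (at 0)" using assms(1) by simp
  show "eventually (\<lambda>n. f n \<le> g n) (at 0)" using ev_ne0 by eventually_elim (rule assms(2))
qed (use assms in auto)

lemma hod_real:
  assumes B: "\<And>s. bounded_op M (F s)" and D: "bounded_op M D"
  shows "has_op_deriv M F D t \<longleftrightarrow> ((\<lambda>h. nrm M (dq F t h D)) \<longlongrightarrow> 0) (at 0)"
proof -
  have e: "\<And>h. op_norm2 M (dq F t h D) = ennreal (nrm M (dq F t h D))"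
    using op_norm2_fin bo_dq B D by blast
  have "has_op_deriv M F D t \<longleftrightarrow> ((\<lambda>h. ennreal (nrm M (dq F t h D))) \<longlongrightarrow> ennreal 0) (at 0)"
    by (simp add: hod_iff D e)
  also have "\<dots> \<longleftrightarrow> ((\<lambda>h. nrm M (dq F t h D)) \<longlongrightarrow> 0) (at 0)"
    by (rule tendsto_ennreal_iff) auto
  finally show ?thesis .
qed

lemma hod_transfer:
  assumes d: "has_op_deriv M F D t" and FG: "\<And>s. op_eq M (F s) (G s)" and DD: "op_eq M D D'"
    and b: "bounded_op M D'"
  shows "has_op_deriv M G D' t"
proof -
  have "op_eq M (dq F t h D) (dq G t h D')" for h
    unfolding op_eq_def
  proof
    fix u assume u: "u \<in> L2 M"
    show "AE x in M. dq F t h D u x = dq G t h D' u x"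
      using op_eq_D[OF FG u, of "t+h"] op_eq_D[OF FG u, of t] op_eq_D[OF DD u]
      by eventually_elim (simp add: dq_def)
  qed
  hence "\<And>h. op_norm2 M (dq F t h D) = op_norm2 M (dq G t h D')" by (rule op_norm2_cong)
  thus ?thesis using d b by (simp add: hod_iff)
qed

lemma hod_unique:
  assumes B: "\<And>s. bounded_op M (F s)" and d1: "has_op_deriv M F D1 t" and d2: "has_op_deriv M F D2 t"
  shows "op_eq M D1 D2"
proof -
  have b1: "bounded_op M D1" and b2: "bounded_op M D2" using d1 d2 by (auto simp: hod_iff)
  have l1: "((\<lambda>h. nrm M (dq F t h D1)) \<longlongrightarrow> 0) (at 0)" using d1 hod_real[where F=F, OF B b1] by blast
  have l2: "((\<lambda>h. nrm M (dq F t h D2)) \<longlongrightarrow> 0) (at 0)" using d2 hod_real[where F=F, OF B b2] by blast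
  have eq: "\<And>h. op_diff D2 D1 = op_diff (dq F t h D1) (dq F t h D2)"
    by (simp add: dq_def op_diff_def fun_eq_iff)
  have le: "nrm M (op_diff D2 D1) \<le> 2 * nrm M (dq F t h D1) + 2 * nrm M (dq F t h D2)" for h
  proof -
    have "nrm M (op_diff (dq F t h D1) (dq F t h D2)) \<le> 2 * nrm M (dq F t h D1) + 2 * nrm M (dq F t h D2)"
      by (intro nrm_diff_le bo_dq B b1 b2)
    thus ?thesis using eq[of h] by simp
  qed
  have lim: "((\<lambda>h. 2 * nrm M (dq F t h D1) + 2 * nrm M (dq F t h D2)) \<longlongrightarrow> 0) (at 0)"
    using tendsto_add[OF tendsto_mult[OF tendsto_const l1] tendsto_mult[OF tendsto_const l2]] by simp
  have "nrm M (op_diff D2 D1) \<le> 0"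
    by (rule tendsto_le[OF _ lim tendsto_const]) (use le in auto)
  hence "nrm M (op_diff D2 D1) = 0" using nrm_nonneg[of M "op_diff D2 D1"] by linarith
  thus ?thesis using nrm_zero_op_eq[OF b2 b1] op_eq_sym by blast
qed

lemma hod_cont:
  assumes B: "\<And>s. bounded_op M (F s)" and d: "has_op_deriv M F D t"
  shows "((\<lambda>h. nrm M (op_diff (F (t+h)) (F t))) \<longlongrightarrow> 0) (at 0)"
proof -
  have bD: "bounded_op M D" using d by (simp add: hod_iff)
  have l: "((\<lambda>h. nrm M (dq F t h D)) \<longlongrightarrow> 0) (at 0)" using d hod_real[where F=F, OF B bD] by blast
  show ?thesis
  proof (rule sandwich0)
    fix h :: real assume h: "h \<noteq> 0"
    have eq: "op_diff (F (t+h)) (F t) = (\<lambda>u x. of_real h * dq F t h D u x + of_real h * D u x)"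
      using h by (simp add: dq_def op_diff_def fun_eq_iff field_simps)
    show "nrm M (op_diff (F (t+h)) (F t)) \<le> 2 * h^2 * nrm M (dq F t h D) + 2 * h^2 * nrm M D"
      unfolding eq using nrm_comb_le[OF bo_dq[OF B B bD] bD, where a="complex_of_real h" and b="complex_of_real h"] by simp
  next
    show "((\<lambda>h. 2 * h^2 * nrm M (dq F t h D) + 2 * h^2 * nrm M D) \<longlongrightarrow> 0) (at 0)"
      by (auto intro!: tendsto_eq_intros l)
  qed simp
qed

lemma hod_diff:
  assumes BF: "\<And>s. bounded_op M (F s)" and BG: "\<And>s. bounded_op M (G s)"
    and dF: "has_op_deriv M F F' t" and dG: "has_op_deriv M G G' t"
  shows "has_op_deriv M (\<lambda>s. op_diff (F s) (G s)) (op_diff F' G') t"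
proof -
  have bF': "bounded_op M F'" and bG': "bounded_op M G'" using dF dG by (auto simp: hod_iff)
  have lF: "((\<lambda>h. nrm M (dq F t h F')) \<longlongrightarrow> 0) (at 0)" using dF hod_real[where F=F, OF BF bF'] by blast
  have lG: "((\<lambda>h. nrm M (dq G t h G')) \<longlongrightarrow> 0) (at 0)" using dG hod_real[where F=G, OF BG bG'] by blast
  have eq: "\<And>h. dq (\<lambda>s. op_diff (F s) (G s)) t h (op_diff F' G') = op_diff (dq F t h F') (dq G t h G')"
    by (simp add: dq_def op_diff_def fun_eq_iff divide_inverse algebra_simps)
  have "((\<lambda>h. nrm M (dq (\<lambda>s. op_diff (F s) (G s)) t h (op_diff F' G'))) \<longlongrightarrow> 0) (at 0)"
  proof (rule sandwich0)
    fix h :: real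
    show "nrm M (dq (\<lambda>s. op_diff (F s) (G s)) t h (op_diff F' G')) \<le> 2 * nrm M (dq F t h F') + 2 * nrm M (dq G t h G')"
      unfolding eq by (intro nrm_diff_le bo_dq BF BG bF' bG')
  next
    show "((\<lambda>h. 2 * nrm M (dq F t h F') + 2 * nrm M (dq G t h G')) \<longlongrightarrow> 0) (at 0)"
      by (auto intro!: tendsto_eq_intros lF lG)
  qed simp
  thus ?thesis by (subst hod_real) (auto intro: bo_diff_op BF BG bF' bG')
qed

lemma hod_add:
  assumes BF: "\<And>s. bounded_op M (F s)" and BG: "\<And>s. bounded_op M (G s)"
    and dF: "has_op_deriv M F F' t" and dG: "has_op_deriv M G G' t"
  shows "has_op_deriv M (\<lambda>s. op_add (F s) (G s)) (op_add F' G') t"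
proof -
  have bF': "bounded_op M F'" and bG': "bounded_op M G'" using dF dG by (auto simp: hod_iff)
  have lF: "((\<lambda>h. nrm M (dq F t h F')) \<longlongrightarrow> 0) (at 0)" using dF hod_real[where F=F, OF BF bF'] by blast
  have lG: "((\<lambda>h. nrm M (dq G t h G')) \<longlongrightarrow> 0) (at 0)" using dG hod_real[where F=G, OF BG bG'] by blast
  have eq: "\<And>h. dq (\<lambda>s. op_add (F s) (G s)) t h (op_add F' G') = op_add (dq F t h F') (dq G t h G')"
    by (simp add: dq_def op_add_def fun_eq_iff divide_inverse algebra_simps)
  have "((\<lambda>h. nrm M (dq (\<lambda>s. op_add (F s) (G s)) t h (op_add F' G'))) \<longlongrightarrow> 0) (at 0)"
  proof (rule sandwich0)
    fix h :: real
    show "nrm M (dq (\<lambda>s. op_add (F s) (G s)) t h (op_add F' G')) \<le> 2 * nrm M (dq F t h F') + 2 * nrm M (dq G t h G')"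
      unfolding eq by (intro nrm_add_le bo_dq BF BG bF' bG')
  next
    show "((\<lambda>h. 2 * nrm M (dq F t h F') + 2 * nrm M (dq G t h G')) \<longlongrightarrow> 0) (at 0)"
      by (auto intro!: tendsto_eq_intros lF lG)
  qed simp
  thus ?thesis by (subst hod_real) (auto intro: bo_add_op BF BG bF' bG')
qed

lemma bo_lin3:
  assumes T: "bounded_op M T" and p: "p \<in> L2 M" and q: "q \<in> L2 M" and r: "r \<in> L2 M"
  shows "AE x in M. T (\<lambda>y. (p y - q y) / c - r y) x = (T p x - T q x) / c - T r x"
proof -
  define w where "w = (\<lambda>y. inverse c * (\<lambda>y. p y - q y) y)"
  have pq: "(\<lambda>y. p y - q y) \<in> L2 M" using L2_diff p q by blast
  have w: "w \<in> L2 M" unfolding w_def using L2_scale[OF pq] by simp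
  have e: "(\<lambda>y. (p y - q y) / c - r y) = (\<lambda>y. w y + (-1) * r y)"
    by (simp add: w_def fun_eq_iff divide_inverse mult.commute)
  have 1: "AE x in M. T (\<lambda>y. w y + (-1) * r y) x = T w x + (-1) * T r x" by (rule bo_lin[OF T w r])
  have 2: "AE x in M. T w x = inverse c * T (\<lambda>y. p y - q y) x" unfolding w_def by (rule bo_scale[OF T pq])
  have 3: "AE x in M. T (\<lambda>y. p y - q y) x = T p x - T q x" by (rule bo_diff[OF T p q])
  from 1 2 3 show ?thesis unfolding e by eventually_elim (simp add: divide_inverse mult.commute)
qed

lemma hod_comp:
  assumes BF: "\<And>s. bounded_op M (F s)" and BG: "\<And>s. bounded_op M (G s)"
    and dF: "has_op_deriv M F F' t" and dG: "has_op_deriv M G G' t"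
  shows "has_op_deriv M (\<lambda>s. F s \<circ>\<^sub>o G s) (op_add (F' \<circ>\<^sub>o G t) (F t \<circ>\<^sub>o G')) t"
proof -
  have bF': "bounded_op M F'" and bG': "bounded_op M G'" using dF dG by (auto simp: hod_iff)
  have lF: "((\<lambda>h. nrm M (dq F t h F')) \<longlongrightarrow> 0) (at 0)" using dF hod_real[where F=F, OF BF bF'] by blast
  have lG: "((\<lambda>h. nrm M (dq G t h G')) \<longlongrightarrow> 0) (at 0)" using dG hod_real[where F=G, OF BG bG'] by blast
  have lE: "((\<lambda>h. nrm M (op_diff (G (t+h)) (G t))) \<longlongrightarrow> 0) (at 0)" by (rule hod_cont[where F=G, OF BG dG])
  have BFG: "\<And>s. bounded_op M (F s \<circ>\<^sub>o G s)" using bo_comp BF BG by blast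
  have bD: "bounded_op M (op_add (F' \<circ>\<^sub>o G t) (F t \<circ>\<^sub>o G'))" by (intro bo_add_op bo_comp BF BG bF' bG')
  define E where "E h = op_diff (G (t+h)) (G t)" for h
  have bE: "\<And>h. bounded_op M (E h)" unfolding E_def using bo_diff_op BG by blast
  define e where "e h = 4 * nrm M (dq F t h F') * (2 * nrm M (G t) + 2 * nrm M (E h))
       + 4 * (nrm M F' * nrm M (E h)) + 2 * (nrm M (F t) * nrm M (dq G t h G'))" for h
  have le: "nrm M (dq (\<lambda>s. F s \<circ>\<^sub>o G s) t h (op_add (F' \<circ>\<^sub>o G t) (F t \<circ>\<^sub>o G'))) \<le> e h" for h
  proof (rule nrm_le)
    have bq: "bounded_op M (dq (\<lambda>s. F s \<circ>\<^sub>o G s) t h (op_add (F' \<circ>\<^sub>o G t) (F t \<circ>\<^sub>o G')))"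
      by (rule bo_dq[OF BFG BFG bD])
    fix u assume u: "u \<in> L2 M"
    show "dq (\<lambda>s. F s \<circ>\<^sub>o G s) t h (op_add (F' \<circ>\<^sub>o G t) (F t \<circ>\<^sub>o G')) u \<in> L2 M" using bo_L2[OF bq u] .
    have gu': "G (t+h) u \<in> L2 M" and gu: "G t u \<in> L2 M" and g'u: "G' u \<in> L2 M"
      using bo_L2 BG bG' u by auto
    have bA: "bounded_op M (dq F t h F')" by (rule bo_dq[OF BF BF bF'])
    have bB: "bounded_op M (dq G t h G')" by (rule bo_dq[OF BG BG bG'])
    define A where "A = dq F t h F' (G (t+h) u)"
    define B where "B = F' (E h u)"
    define C where "C = F t (dq G t h G' u)"
    have AL: "A \<in> L2 M" unfolding A_def using bo_L2[OF bA gu'] .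
    have BL: "B \<in> L2 M" unfolding B_def using bo_L2[OF bF' bo_L2[OF bE u]] .
    have CL: "C \<in> L2 M" unfolding C_def using bo_L2[OF BF bo_L2[OF bB u]] .
    have key: "AE x in M. dq (\<lambda>s. F s \<circ>\<^sub>o G s) t h (op_add (F' \<circ>\<^sub>o G t) (F t \<circ>\<^sub>o G')) u x = A x + B x + C x"
    proof -
      have a1: "AE x in M. B x = F' (G (t+h) u) x - F' (G t u) x"
        unfolding B_def E_def op_diff_def by (rule bo_diff[OF bF' gu' gu])
      have a2: "AE x in M. C x = (F t (G (t+h) u) x - F t (G t u) x) / complex_of_real h - F t (G' u) x"
        unfolding C_def dq_def by (rule bo_lin3[OF BF gu' gu g'u])
      from a1 a2 show ?thesis
        by eventually_elim (simp add: A_def dq_def op_add_def op_comp_def, simp add: divide_inverse algebra_simps)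
    qed
    have "nl M (dq (\<lambda>s. F s \<circ>\<^sub>o G s) t h (op_add (F' \<circ>\<^sub>o G t) (F t \<circ>\<^sub>o G')) u) = nl M (\<lambda>x. (\<lambda>x. A x + B x) x + C x)"
      using key by (intro nl_cong_AE) simp
    also have "\<dots> \<le> 2 * nl M (\<lambda>x. A x + B x) + 2 * nl M C"
      by (rule nl_add_le[OF L2_add[OF AL BL] CL])
    also have "\<dots> \<le> 2 * (2 * nl M A + 2 * nl M B) + 2 * nl M C"
      using nl_add_le[OF AL BL] by simp
    also have "\<dots> \<le> 2 * (2 * (nrm M (dq F t h F') * ((2 * nrm M (G t) + 2 * nrm M (E h)) * nl M u))
                       + 2 * (nrm M F' * (nrm M (E h) * nl M u)))
                   + 2 * (nrm M (F t) * (nrm M (dq G t h G') * nl M u))"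
    proof -
      have "G (t+h) = op_add (E h) (G t)" by (simp add: E_def op_add_def op_diff_def fun_eq_iff)
      hence nG: "nrm M (G (t+h)) \<le> 2 * nrm M (E h) + 2 * nrm M (G t)"
        using nrm_add_le[OF bE BG] by simp
      have "nl M A \<le> nrm M (dq F t h F') * nl M (G (t+h) u)" unfolding A_def by (rule nrm_bound[OF bA gu'])
      also have "\<dots> \<le> nrm M (dq F t h F') * (nrm M (G (t+h)) * nl M u)"
        by (intro mult_left_mono nrm_bound BG u) simp
      also have "\<dots> \<le> nrm M (dq F t h F') * ((2 * nrm M (G t) + 2 * nrm M (E h)) * nl M u)"
        using nG by (intro mult_left_mono mult_right_mono) auto
      finally have 1: "nl M A \<le> nrm M (dq F t h F') * ((2 * nrm M (G t) + 2 * nrm M (E h)) * nl M u)" .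
      have "nl M B \<le> nrm M F' * nl M (E h u)" unfolding B_def by (rule nrm_bound[OF bF' bo_L2[OF bE u]])
      also have "\<dots> \<le> nrm M F' * (nrm M (E h) * nl M u)"
        by (intro mult_left_mono nrm_bound bE u) simp
      finally have 2: "nl M B \<le> nrm M F' * (nrm M (E h) * nl M u)" .
      have "nl M C \<le> nrm M (F t) * nl M (dq G t h G' u)" unfolding C_def by (rule nrm_bound[OF BF bo_L2[OF bB u]])
      also have "\<dots> \<le> nrm M (F t) * (nrm M (dq G t h G') * nl M u)"
        by (intro mult_left_mono nrm_bound bB u) simp
      finally have 3: "nl M C \<le> nrm M (F t) * (nrm M (dq G t h G') * nl M u)" .
      from 1 2 3 show ?thesis by (intro add_mono mult_left_mono) auto
    qed
    also have "\<dots> = e h * nl M u" by (simp add: e_def algebra_simps)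
    finally show "nl M (dq (\<lambda>s. F s \<circ>\<^sub>o G s) t h (op_add (F' \<circ>\<^sub>o G t) (F t \<circ>\<^sub>o G')) u) \<le> e h * nl M u" .
  next
    show "0 \<le> e h" unfolding e_def by simp
  qed
  have lE': "((\<lambda>h. nrm M (E h)) \<longlongrightarrow> 0) (at 0)" using lE by (simp add: E_def)
  have "(e \<longlongrightarrow> 0) (at 0)" unfolding e_def by (auto intro!: tendsto_eq_intros lF lG lE')
  hence "((\<lambda>h. nrm M (dq (\<lambda>s. F s \<circ>\<^sub>o G s) t h (op_add (F' \<circ>\<^sub>o G t) (F t \<circ>\<^sub>o G')))) \<longlongrightarrow> 0) (at 0)"
    by (intro sandwich0[OF _ le]) simp
  thus ?thesis by (subst hod_real[OF BFG bD])
qed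

lemma hod_inv:
  assumes I: "\<And>s. op_invertible M (F s)" and dF: "has_op_deriv M F F' t"
  shows "has_op_deriv M (\<lambda>s. op_inv M (F s)) (op_neg (op_inv M (F t) \<circ>\<^sub>o F' \<circ>\<^sub>o op_inv M (F t))) t"
proof -
  have BF: "\<And>s. bounded_op M (F s)" using inv_bo I by blast
  define Fi where "Fi s = op_inv M (F s)" for s
  have BI: "\<And>s. bounded_op M (Fi s)" unfolding Fi_def using inv_props(1) I by blast
  have bF': "bounded_op M F'" using dF by (simp add: hod_iff)
  have lF: "((\<lambda>h. nrm M (dq F t h F')) \<longlongrightarrow> 0) (at 0)" using dF hod_real[where F=F, OF BF bF'] by blast
  define E where "E h = op_diff (F (t+h)) (F t)" for h
  have bE: "\<And>h. bounded_op M (E h)" unfolding E_def using bo_diff_op BF by blast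
  have lE: "((\<lambda>h. nrm M (E h)) \<longlongrightarrow> 0) (at 0)" unfolding E_def by (rule hod_cont[where F=F, OF BF dF])
  define M0 where "M0 = nrm M (Fi t)"
  have M0: "0 \<le> M0" by (simp add: M0_def)
  define D where "D = op_neg (Fi t \<circ>\<^sub>o F' \<circ>\<^sub>o Fi t)"
  have bD: "bounded_op M D" unfolding D_def by (intro bo_neg_op bo_comp BI bF')
  have ev: "eventually (\<lambda>h. nrm M (E h) < 1 / (4 * (M0 + 1))) (at 0)"
    using order_tendstoD(2)[OF lE, of "1 / (4 * (M0 + 1))"] M0 by simp
  have bnd: "nrm M (Fi (t+h)) \<le> 4 * M0" if hE: "nrm M (E h) < 1 / (4 * (M0 + 1))" for h
  proof (rule nrm_le)
    fix v assume v: "v \<in> L2 M"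
    show "Fi (t+h) v \<in> L2 M" using bo_L2[OF BI v] .
    define w where "w = Fi (t+h) v"
    have w: "w \<in> L2 M" unfolding w_def using bo_L2[OF BI v] .
    have "AE x in M. Fi t (F t w) x = w x" unfolding Fi_def by (rule inv_left_AE[OF I w])
    hence "nl M w = nl M (Fi t (F t w))" by (intro nl_cong_AE) (auto elim: AE_mp)
    also have "\<dots> \<le> M0 * nl M (F t w)" unfolding M0_def by (rule nrm_bound[OF BI bo_L2[OF BF w]])
    finally have 1: "nl M w \<le> M0 * nl M (F t w)" .
    have ftw: "F t w = (\<lambda>x. F (t+h) w x + (-1) * E h w x)" by (simp add: E_def op_diff_def fun_eq_iff)
    have "nl M (F t w) \<le> 2 * nl M (F (t+h) w) + 2 * nl M (\<lambda>x. (-1) * E h w x)"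
      unfolding ftw by (rule nl_add_le[OF bo_L2[OF BF w] L2_scale[OF bo_L2[OF bE w]]])
    also have "nl M (\<lambda>x. (-1) * E h w x) = nl M (E h w)" using nl_cmult[OF bo_L2[OF bE w], of "-1"] by simp
    also have "nl M (F (t+h) w) = nl M v"
      using inv_right_AE[OF I v, of "t+h"] unfolding w_def Fi_def by (intro nl_cong_AE) simp
    finally have 2: "nl M (F t w) \<le> 2 * nl M v + 2 * (nrm M (E h) * nl M w)"
      using nrm_bound[OF bE w, of h] by linarith
    have 3: "M0 * (2 * (nrm M (E h) * nl M w)) \<le> 1/2 * nl M w"
    proof -
      have "M0 * nrm M (E h) \<le> M0 * (1 / (4 * (M0 + 1)))" using hE M0 by (intro mult_left_mono) auto
      also have "\<dots> \<le> 1/4" using M0 by (simp add: field_simps)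
      finally have "M0 * nrm M (E h) \<le> 1/4" .
      hence "M0 * nrm M (E h) * nl M w \<le> 1/4 * nl M w" by (intro mult_right_mono) auto
      thus ?thesis by (simp add: algebra_simps)
    qed
    have "nl M w \<le> M0 * (2 * nl M v) + M0 * (2 * (nrm M (E h) * nl M w))"
      using 1 mult_left_mono[OF 2 M0] by (simp add: algebra_simps)
    hence "nl M w \<le> 4 * M0 * nl M v" using 3 by linarith
    thus "nl M (Fi (t+h) v) \<le> 4 * M0 * nl M v" unfolding w_def .
  qed (use M0 in simp)
  have fact1: "AE x in M. Fi (t+h) (E h (Fi t y)) x = Fi t y x - Fi (t+h) y x" if y: "y \<in> L2 M" for h y
  proof -
    have q: "Fi t y \<in> L2 M" using bo_L2[OF BI y] .
    have a: "AE x in M. Fi (t+h) (E h (Fi t y)) x = Fi (t+h) (F (t+h) (Fi t y)) x - Fi (t+h) (F t (Fi t y)) x"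
      unfolding E_def op_diff_def by (rule bo_diff[OF BI bo_L2[OF BF q] bo_L2[OF BF q]])
    have b: "AE x in M. Fi (t+h) (F (t+h) (Fi t y)) x = Fi t y x"
      unfolding Fi_def using inv_left_AE[OF I] q Fi_def by simp
    have c0: "AE x in M. F t (Fi t y) x = y x" unfolding Fi_def by (rule inv_right_AE[OF I y])
    have c: "AE x in M. Fi (t+h) (F t (Fi t y)) x = Fi (t+h) y x"
      by (rule bo_resp[OF BI bo_L2[OF BF q] y c0])
    from a b c show ?thesis by eventually_elim simp
  qed
  define g where "g h = 2 * (nrm M (Fi (t+h)) * nrm M (dq F t h F') * M0)
      + 2 * (nrm M (Fi (t+h)) * nrm M (E h) * M0 * nrm M F' * M0)" for h
  have le: "nrm M (dq (\<lambda>s. op_inv M (F s)) t h D) \<le> g h" if h: "h \<noteq> 0" for h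
  proof (rule nrm_le)
    have bq: "bounded_op M (dq (\<lambda>s. op_inv M (F s)) t h D)"
      using bo_dq[OF BI BI bD] unfolding Fi_def by simp
    fix u assume u: "u \<in> L2 M"
    show "dq (\<lambda>s. op_inv M (F s)) t h D u \<in> L2 M" using bo_L2[OF bq u] .
    define w where "w = Fi t u"
    have w: "w \<in> L2 M" unfolding w_def using bo_L2[OF BI u] .
    have fw: "F' w \<in> L2 M" using bo_L2[OF bF' w] .
    define z where "z = Fi t (F' w)"
    have z: "z \<in> L2 M" unfolding z_def using bo_L2[OF BI fw] .
    define A where "A = dq F t h F' w"
    have bA: "bounded_op M (dq F t h F')" by (rule bo_dq[OF BF BF bF'])
    have A: "A \<in> L2 M" unfolding A_def using bo_L2[OF bA w] .
    have Ehw: "E h w = (\<lambda>y. (\<lambda>y. complex_of_real h * A y) y + complex_of_real h * F' w y)"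
      using h by (simp add: E_def A_def dq_def op_diff_def fun_eq_iff field_simps)
    have f2a: "AE x in M. Fi (t+h) (E h w) x = Fi (t+h) (\<lambda>y. complex_of_real h * A y) x + complex_of_real h * Fi (t+h) (F' w) x"
      unfolding Ehw by (rule bo_lin[OF BI L2_scale[OF A] fw])
    have f2b: "AE x in M. Fi (t+h) (\<lambda>y. complex_of_real h * A y) x = complex_of_real h * Fi (t+h) A x"
      by (rule bo_scale[OF BI A])
    have f1u: "AE x in M. Fi (t+h) (E h w) x = w x - Fi (t+h) u x"
      unfolding w_def by (rule fact1[OF u])
    have f1z: "AE x in M. Fi (t+h) (E h z) x = z x - Fi (t+h) (F' w) x"
      unfolding z_def by (rule fact1[OF fw])
    have key: "AE x in M. dq (\<lambda>s. op_inv M (F s)) t h D u x = (-1) * Fi (t+h) A x + Fi (t+h) (E h z) x"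
      using f2a f2b f1u f1z
    proof eventually_elim
      case (elim x)
      have e1: "w x - Fi (t+h) u x = complex_of_real h * Fi (t+h) A x + complex_of_real h * Fi (t+h) (F' w) x"
        using elim(1,2,3) by simp
      have e2: "Fi (t + h) u x - w x = - (complex_of_real h * (Fi (t+h) A x + Fi (t+h) (F' w) x))"
        using e1 by (simp add: algebra_simps)
      have "dq (\<lambda>s. op_inv M (F s)) t h D u x = (Fi (t + h) u x - w x) / complex_of_real h + z x"
        by (simp add: dq_def D_def op_neg_def op_comp_def Fi_def w_def z_def)
      also have "\<dots> = - (Fi (t+h) A x + Fi (t+h) (F' w) x) + z x"
        unfolding e2 using h by simp
      also have "\<dots> = (-1) * Fi (t+h) A x + Fi (t+h) (E h z) x" using elim(4) by simp
      finally show ?case .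
    qed
    have "nl M (dq (\<lambda>s. op_inv M (F s)) t h D u) = nl M (\<lambda>x. (-1) * Fi (t+h) A x + Fi (t+h) (E h z) x)"
      using key by (rule nl_cong_AE)
    also have "\<dots> \<le> 2 * nl M (\<lambda>x. (-1) * Fi (t+h) A x) + 2 * nl M (Fi (t+h) (E h z))"
      by (rule nl_add_le[OF L2_scale[OF bo_L2[OF BI A]] bo_L2[OF BI bo_L2[OF bE z]]])
    also have "nl M (\<lambda>x. (-1) * Fi (t+h) A x) = nl M (Fi (t+h) A)"
      using nl_cmult[OF bo_L2[OF BI A], of "-1"] by simp
    also have "2 * nl M (Fi (t+h) A) + 2 * nl M (Fi (t+h) (E h z)) \<le> g h * nl M u"
    proof -
      have "nl M (Fi (t+h) A) \<le> nrm M (Fi (t+h)) * nl M A" by (rule nrm_bound[OF BI A])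
      also have "\<dots> \<le> nrm M (Fi (t+h)) * (nrm M (dq F t h F') * nl M w)"
        unfolding A_def by (intro mult_left_mono nrm_bound bA w) simp
      also have "\<dots> \<le> nrm M (Fi (t+h)) * (nrm M (dq F t h F') * (M0 * nl M u))"
        unfolding w_def M0_def by (intro mult_left_mono nrm_bound BI u) simp_all
      finally have 1: "nl M (Fi (t+h) A) \<le> nrm M (Fi (t+h)) * (nrm M (dq F t h F') * (M0 * nl M u))" .
      have "nl M (Fi (t+h) (E h z)) \<le> nrm M (Fi (t+h)) * nl M (E h z)" by (rule nrm_bound[OF BI bo_L2[OF bE z]])
      also have "\<dots> \<le> nrm M (Fi (t+h)) * (nrm M (E h) * nl M z)"
        by (intro mult_left_mono nrm_bound bE z) simp
      also have "\<dots> \<le> nrm M (Fi (t+h)) * (nrm M (E h) * (M0 * nl M (F' w)))"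
        unfolding z_def M0_def by (intro mult_left_mono nrm_bound BI fw) simp_all
      also have "\<dots> \<le> nrm M (Fi (t+h)) * (nrm M (E h) * (M0 * (nrm M F' * (M0 * nl M u))))"
      proof -
        have "nl M (F' w) \<le> nrm M F' * nl M w" by (rule nrm_bound[OF bF' w])
        also have "\<dots> \<le> nrm M F' * (M0 * nl M u)"
          unfolding w_def M0_def by (intro mult_left_mono nrm_bound BI u) simp
        finally have "nl M (F' w) \<le> nrm M F' * (M0 * nl M u)" .
        thus ?thesis using M0 by (intro mult_left_mono) auto
      qed
      finally have 2: "nl M (Fi (t+h) (E h z)) \<le> nrm M (Fi (t+h)) * (nrm M (E h) * (M0 * (nrm M F' * (M0 * nl M u))))" .
      have "2 * nl M (Fi (t+h) A) + 2 * nl M (Fi (t+h) (E h z)) \<le>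
            2 * (nrm M (Fi (t+h)) * (nrm M (dq F t h F') * (M0 * nl M u))) +
            2 * (nrm M (Fi (t+h)) * (nrm M (E h) * (M0 * (nrm M F' * (M0 * nl M u)))))"
        using 1 2 by (intro add_mono mult_left_mono) auto
      also have "\<dots> = g h * nl M u" by (simp add: g_def algebra_simps)
      finally show ?thesis .
    qed
    finally show "nl M (dq (\<lambda>s. op_inv M (F s)) t h D u) \<le> g h * nl M u" .
  next
    show "0 \<le> g h" unfolding g_def using M0 by simp
  qed
  define e where "e h = 2 * (4 * M0 * nrm M (dq F t h F') * M0)
      + 2 * (4 * M0 * nrm M (E h) * M0 * nrm M F' * M0)" for h
  have le2: "eventually (\<lambda>h. nrm M (dq (\<lambda>s. op_inv M (F s)) t h D) \<le> e h) (at 0)"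
    using ev ev_ne0
  proof eventually_elim
    case (elim h)
    have N: "nrm M (Fi (t+h)) \<le> 4 * M0" using bnd elim(1) by blast
    have "g h \<le> e h" unfolding g_def e_def using N M0
      by (intro add_mono mult_left_mono mult_right_mono) auto
    thus ?case using le[OF elim(2)] by linarith
  qed
  have "(e \<longlongrightarrow> 0) (at 0)" unfolding e_def by (auto intro!: tendsto_eq_intros lF lE)
  hence "((\<lambda>h. nrm M (dq (\<lambda>s. op_inv M (F s)) t h D)) \<longlongrightarrow> 0) (at 0)"
    by (intro tendsto_sandwich[OF _ le2 tendsto_const]) simp
  hence "has_op_deriv M (\<lambda>s. op_inv M (F s)) D t"
    using hod_real[of M "\<lambda>s. op_inv M (F s)" D t] BI bD unfolding Fi_def by blast
  thus ?thesis unfolding D_def Fi_def .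
qed

lemma meas_powi[measurable]: "(\<lambda>x::complex. x powi k) \<in> borel_measurable borel"
proof (cases "0 \<le> k")
  case True thus ?thesis unfolding power_int_def by simp
next
  case False thus ?thesis unfolding power_int_def by simp measurable
qed

lemma meas_exp[measurable]: "(exp :: complex \<Rightarrow> complex) \<in> borel_measurable borel"
  by (rule borel_measurable_continuous_onI) (intro continuous_intros)

lemma exp_rem_bound: "cmod (exp w - 1 - w) \<le> (cmod w)^2 * exp (cmod w)"
proof -
  define a where "a n = inverse (fact (n+2)) *\<^sub>R w^(n+2)" for n
  define b where "b n = (cmod w)^2 * (inverse (fact n) * (cmod w)^n)" for n
  have ab: "norm (a n) \<le> b n" for n
  proof -
    have f: "(fact n :: real) \<le> fact (n+2)" by (rule fact_mono) simp
    have fp: "(0::real) < fact n" by simp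
    have "norm (a n) = inverse (fact (n+2)) * (cmod w ^ n * cmod w ^ 2)"
      unfolding a_def norm_scaleR power_add by (simp add: norm_mult norm_power)
    hence "norm (a n) = (cmod w)^2 * ((cmod w)^n / fact (n+2))" by (simp add: divide_inverse ac_simps)
    also have "\<dots> \<le> (cmod w)^2 * ((cmod w)^n / fact n)"
      by (intro mult_left_mono divide_left_mono f) (auto simp: fp)
    finally show ?thesis by (simp add: b_def field_simps)
  qed
  have sb: "summable b" unfolding b_def by (intro summable_mult summable_exp)
  have "exp w = 1 + w + suminf a" unfolding a_def by (rule exp_first_two_terms)
  hence "exp w - 1 - w = suminf a" by (simp add: algebra_simps)
  hence "cmod (exp w - 1 - w) \<le> suminf b" using norm_suminf_le[OF ab sb] by simp
  also have "suminf b = (cmod w)^2 * exp (cmod w)"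
  proof -
    have e: "(\<Sum>n. inverse (fact n) * (cmod w)^n) = exp (cmod w)"
      by (simp add: exp_def divide_inverse mult.commute)
    show ?thesis unfolding b_def
      using suminf_mult[OF summable_exp[of "cmod w"], where c="(cmod w)^2"] e by simp
  qed
  finally show ?thesis .
qed

lemma exp_dq_bound:
  fixes z :: complex and t h :: real
  assumes h: "h \<noteq> 0"
  shows "cmod ((exp (z * of_real (t+h)) - exp (z * of_real t)) / of_real h - z * exp (z * of_real t))
          \<le> (cmod z)^2 * \<bar>h\<bar> * exp (cmod z * \<bar>t\<bar>) * exp (cmod z * \<bar>h\<bar>)"
proof -
  define w where "w = z * of_real h"
  have e: "(exp (z * of_real (t+h)) - exp (z * of_real t)) / of_real h - z * exp (z * of_real t)
        = exp (z * of_real t) * (exp w - 1 - w) / of_real h"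
    using h by (simp add: w_def field_simps exp_add[symmetric] distrib_left)
  have "cmod (exp (z * of_real t)) \<le> exp (cmod z * \<bar>t\<bar>)"
    using norm_exp[of "z * of_real t"] by (simp add: norm_mult)
  moreover have "cmod (exp w - 1 - w) \<le> (cmod z)^2 * h^2 * exp (cmod z * \<bar>h\<bar>)"
    using exp_rem_bound[of w] by (simp add: w_def norm_mult power_mult_distrib)
  ultimately have "cmod (exp (z * of_real t) * (exp w - 1 - w)) \<le> exp (cmod z * \<bar>t\<bar>) * ((cmod z)^2 * h^2 * exp (cmod z * \<bar>h\<bar>))"
    unfolding norm_mult by (intro mult_mono) auto
  hence "cmod (exp (z * of_real t) * (exp w - 1 - w) / of_real h) \<le> exp (cmod z * \<bar>t\<bar>) * ((cmod z)^2 * h^2 * exp (cmod z * \<bar>h\<bar>)) / \<bar>h\<bar>"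
    using h by (simp add: norm_divide divide_right_mono)
  also have "\<dots> = (cmod z)^2 * \<bar>h\<bar> * exp (cmod z * \<bar>t\<bar>) * exp (cmod z * \<bar>h\<bar>)"
    using h by (simp add: power2_eq_square field_simps)
  finally show ?thesis unfolding e .
qed

lemma powi_bound:
  fixes x :: complex
  assumes "cmod x \<le> R" "cmod (1/x) \<le> R" "x \<noteq> 0" "1 \<le> R"
  shows "cmod (x powi n) \<le> R ^ nat \<bar>n\<bar>"
proof (cases "0 \<le> n")
  case True
  hence "cmod (x powi n) = cmod x ^ nat n" by (simp add: power_int_def norm_power)
  also have "\<dots> \<le> R ^ nat n" using assms by (intro power_mono) auto
  finally show ?thesis using True by simp
next
  case False
  hence "cmod (x powi n) = cmod (1/x) ^ nat (-n)" by (simp add: power_int_def norm_power norm_inverse divide_inverse)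
  also have "\<dots> \<le> R ^ nat (-n)" using assms by (intro power_mono) auto
  finally show ?thesis using False by simp
qed

lemma mult_L2:
  assumes f: "f \<in> borel_measurable M" and b: "AE x in M. cmod (f x) \<le> K" and u: "u \<in> L2 M"
  shows "(\<lambda>x. f x * u x) \<in> L2 M" "nl M (\<lambda>x. f x * u x) \<le> K^2 * nl M u"
proof -
  have K: "AE x in M. 0 \<le> K" using b by eventually_elim (use norm_ge_zero order_trans in blast)
  have "l2n M (\<lambda>x. f x * u x) \<le> (\<integral>\<^sup>+ x. ennreal (K^2) * ennreal ((cmod (u x))\<^sup>2) \<partial>M)"
    unfolding l2n_def
  proof (rule nn_integral_mono_AE)
    show "AE x in M. ennreal ((cmod (f x * u x))\<^sup>2) \<le> ennreal (K^2) * ennreal ((cmod (u x))\<^sup>2)"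
      using b K
    proof eventually_elim
      case (elim x)
      have "(cmod (f x * u x))^2 = (cmod (f x))^2 * (cmod (u x))^2" by (simp add: norm_mult power_mult_distrib)
      also have "\<dots> \<le> K^2 * (cmod (u x))^2" using elim by (intro mult_right_mono power_mono) auto
      finally show ?case by (simp add: ennreal_mult[symmetric] ennreal_leI)
    qed
  qed
  also have "\<dots> = ennreal (K^2) * l2n M u" unfolding l2n_def using L2_meas[OF u] by (subst nn_integral_cmult) auto
  finally have le: "l2n M (\<lambda>x. f x * u x) \<le> ennreal (K^2) * l2n M u" .
  have m: "(\<lambda>x. f x * u x) \<in> borel_measurable M" using f L2_meas[OF u] by measurable
  have "l2n M (\<lambda>x. f x * u x) < \<infinity>" using le u
    by (simp add: L2_iff) (metis ennreal_mult_less_top ennreal_less_top le_less_trans)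
  thus L: "(\<lambda>x. f x * u x) \<in> L2 M" using m by (simp add: L2_iff)
  have "ennreal (nl M (\<lambda>x. f x * u x)) \<le> ennreal (K^2 * nl M u)"
    using le L u by (simp add: l2n_nl ennreal_mult)
  thus "nl M (\<lambda>x. f x * u x) \<le> K^2 * nl M u" by (subst (asm) ennreal_le_iff) auto
qed

lemma ab_bound:
  fixes x z :: complex and t h R :: real
  assumes x: "cmod x \<le> R" "cmod (1/x) \<le> R" "x \<noteq> 0" and R: "1 \<le> R" and z: "cmod z \<le> R"
    and n: "nat \<bar>n\<bar> \<le> N" and h: "h \<noteq> 0" "\<bar>h\<bar> \<le> 1"
  shows "cmod (x powi n * ((exp (z * of_real (t+h)) - exp (z * of_real t)) / of_real h - z * exp (z * of_real t)))
     \<le> R ^ N * (R^2 * \<bar>h\<bar> * exp (R * \<bar>t\<bar>) * exp R)"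
proof -
  have 1: "cmod (x powi n) \<le> R ^ N"
  proof -
    have "cmod (x powi n) \<le> R ^ nat \<bar>n\<bar>" by (rule powi_bound[OF x R])
    also have "\<dots> \<le> R ^ N" using R n by (intro power_increasing) auto
    finally show ?thesis .
  qed
  have 2: "(cmod z)^2 * \<bar>h\<bar> * exp (cmod z * \<bar>t\<bar>) * exp (cmod z * \<bar>h\<bar>) \<le> R^2 * \<bar>h\<bar> * exp (R * \<bar>t\<bar>) * exp R"
  proof -
    have a: "(cmod z)^2 \<le> R^2" using z by (intro power_mono) auto
    have b: "exp (cmod z * \<bar>t\<bar>) \<le> exp (R * \<bar>t\<bar>)" using z by (intro exp_le_cancel_iff[THEN iffD2] mult_right_mono) auto
    have c: "exp (cmod z * \<bar>h\<bar>) \<le> exp R"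
    proof -
      have "cmod z * \<bar>h\<bar> \<le> R * 1" using z h R by (intro mult_mono) auto
      thus ?thesis by simp
    qed
    show ?thesis using a b c by (intro mult_mono mult_right_mono) auto
  qed
  show ?thesis unfolding norm_mult
    using 1 order_trans[OF exp_dq_bound[OF h(1), of z t] 2] R
    by (intro mult_mono) auto
qed

lemma G_deriv:
  fixes C :: op and R :: real and G :: "int \<Rightarrow> real \<Rightarrow> op"
  assumes sM: "sets M = sets borel"
    and AEb: "AE z in M. z \<noteq> 0 \<and> cmod z \<le> R \<and> cmod (1/z) \<le> R" and R: "1 \<le> R"
    and C: "bounded_op M C"
    and bG: "\<And>k t. bounded_op M (G k t)"
    and Gd: "\<And>k t. G k t = (\<lambda>u x. mult_op (\<lambda>\<beta>. \<beta> powi (k + 2) * exp (\<beta> * complex_of_real t)) u x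
      + (mult_op (\<lambda>\<beta>. \<beta> powi (- k) * exp (complex_of_real t / \<beta>)) \<circ>\<^sub>o C) u x)"
  shows "has_op_deriv M (G k) (G (k+1) t) t"
proof -
  define a where "a (h::real) (x::complex) = x powi (k+2) * ((exp (x * of_real (t+h)) - exp (x * of_real t)) / of_real h - x * exp (x * of_real t))" for h x
  define b where "b (h::real) (x::complex) = x powi (-k) * ((exp ((1/x) * of_real (t+h)) - exp ((1/x) * of_real t)) / of_real h - (1/x) * exp ((1/x) * of_real t))" for h x
  define N where "N = nat \<bar>k\<bar> + 2"
  define P where "P (h::real) = R ^ N * (R^2 * \<bar>h\<bar> * exp (R * \<bar>t\<bar>) * exp R)" for h
  have ma: "a h \<in> borel_measurable M" for h
  proof -
    have "a h \<in> borel_measurable borel" unfolding a_def by measurable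
    thus ?thesis by (subst measurable_cong_sets[OF sM refl])
  qed
  have mb: "b h \<in> borel_measurable M" for h
  proof -
    have "b h \<in> borel_measurable borel" unfolding b_def by measurable
    thus ?thesis by (subst measurable_cong_sets[OF sM refl])
  qed
  have key: "AE x in M. dq (G k) t h (G (k+1) t) u x = a h x * u x + b h x * C u x" if h: "h \<noteq> 0" for h u
    using AEb
  proof eventually_elim
    case (elim x)
    have x: "x \<noteq> 0" using elim by simp
    have p1: "x powi (k + 1 + 2) = x powi (k+2) * x"
    proof -
      have "x powi (k + 1 + 2) = x powi ((k+2) + 1)" by (simp add: ac_simps)
      also have "\<dots> = x powi (k+2) * x" using x by (rule power_int_add_1[OF disjI1])
      finally show ?thesis .
    qed
    have p2: "x powi (- (k + 1)) = x powi (-k) * (1/x)"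
    proof -
      have "x powi (- (k + 1)) = x powi (-k + (-1))" by (simp add: ac_simps)
      also have "\<dots> = x powi (-k) * x powi (-1)" using x by (rule power_int_add[OF disjI1])
      finally show ?thesis by (simp add: divide_inverse)
    qed
    have e1: "\<And>s. complex_of_real s / x = (1/x) * complex_of_real s" by simp
    show ?case unfolding Gd mult_op_def op_comp_def dq_def a_def b_def p1 p2 e1
      by (simp add: divide_inverse algebra_simps)
  qed
  have bound: "nrm M (dq (G k) t h (G (k+1) t)) \<le> 2 * (P h)^2 + 2 * (P h)^2 * nrm M C"
    if h: "h \<noteq> 0" "\<bar>h\<bar> \<le> 1" for h
  proof (rule nrm_le)
    fix u assume u: "u \<in> L2 M"
    show "dq (G k) t h (G (k+1) t) u \<in> L2 M" using bo_L2[OF bo_dq[OF bG bG bG] u] .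
    have aB: "AE x in M. cmod (a h x) \<le> P h" using AEb
    proof eventually_elim
      case (elim x)
      show ?case unfolding a_def P_def
        by (rule ab_bound) (use elim R h in \<open>auto simp: N_def\<close>)
    qed
    have bB: "AE x in M. cmod (b h x) \<le> P h" using AEb
    proof eventually_elim
      case (elim x)
      show ?case unfolding b_def P_def
        by (rule ab_bound) (use elim R h in \<open>auto simp: N_def\<close>)
    qed
    have Cu: "C u \<in> L2 M" using bo_L2[OF C u] .
    note A = mult_L2[OF ma aB u] and B = mult_L2[OF mb bB Cu]
    have "nl M (dq (G k) t h (G (k+1) t) u) = nl M (\<lambda>x. a h x * u x + b h x * C u x)"
      using key[OF h(1)] by (rule nl_cong_AE)
    also have "\<dots> \<le> 2 * nl M (\<lambda>x. a h x * u x) + 2 * nl M (\<lambda>x. b h x * C u x)"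
      by (rule nl_add_le[OF A(1) B(1)])
    also have "\<dots> \<le> 2 * ((P h)^2 * nl M u) + 2 * ((P h)^2 * (nrm M C * nl M u))"
    proof -
      have "nl M (\<lambda>x. b h x * C u x) \<le> (P h)^2 * (nrm M C * nl M u)"
        using B(2) nrm_bound[OF C u] by (meson mult_left_mono order_trans zero_le_power2)
      thus ?thesis using A(2) by linarith
    qed
    also have "\<dots> = (2 * (P h)^2 + 2 * (P h)^2 * nrm M C) * nl M u" by (simp add: algebra_simps)
    finally show "nl M (dq (G k) t h (G (k+1) t) u) \<le> (2 * (P h)^2 + 2 * (P h)^2 * nrm M C) * nl M u" .
  qed simp
  have lim: "((\<lambda>h. 2 * (P h)^2 + 2 * (P h)^2 * nrm M C) \<longlongrightarrow> 0) (at 0)"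
    unfolding P_def by (auto intro!: tendsto_eq_intros)
  have ev1: "eventually (\<lambda>h. \<bar>h\<bar> < 1) (at (0::real))"
    using order_tendstoD(2)[OF tendsto_rabs[OF tendsto_ident_at[of "0::real" UNIV]], of 1] by simp
  have ev: "eventually (\<lambda>h. nrm M (dq (G k) t h (G (k+1) t)) \<le> 2 * (P h)^2 + 2 * (P h)^2 * nrm M C) (at 0)"
    using ev1 ev_ne0 by eventually_elim (rule bound; simp)
  have "((\<lambda>h. nrm M (dq (G k) t h (G (k+1) t))) \<longlongrightarrow> 0) (at 0)"
    by (rule tendsto_sandwich[OF _ ev tendsto_const lim]) simp
  thus ?thesis using hod_real[where F="G k", OF bG bG] by blast
qed

lemma mu_sets: "sets (mu_meas \<sigma>) = sets borel"
  unfolding mu_meas_def using sets.sigma_sets_eq[of borel] by (simp add: sets_measure_of_conv)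

lemma supp_null:
  fixes \<sigma> :: "real measure"
  assumes s: "sets \<sigma> = sets borel"
  shows "\<exists>U. U \<in> null_sets \<sigma> \<and> open U \<and> - supp_meas \<sigma> \<subseteq> U"
proof -
  define F where "F = {ball x e | x e. 0 < e \<and> emeasure \<sigma> (ball x e) = 0}"
  have "\<And>S. S \<in> F \<Longrightarrow> open S" unfolding F_def by auto
  then obtain F' where F': "F' \<subseteq> F" "countable F'" "\<Union>F' = \<Union>F" by (rule Lindelof)
  have null: "S \<in> null_sets \<sigma>" if "S \<in> F" for S
  proof -
    from that obtain x e where S: "S = ball x e" "emeasure \<sigma> (ball x e) = 0" unfolding F_def by blast
    have "S \<in> sets \<sigma>" unfolding s S(1) by (rule borel_open) simp
    thus ?thesis using S by (simp add: null_sets_def)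
  qed
  have U: "(\<Union>S\<in>F'. S) \<in> null_sets \<sigma>" by (rule null_sets_UN'[OF F'(2)]) (use F'(1) null in blast)
  have op: "open (\<Union>F')" using F'(1) \<open>\<And>S. S \<in> F \<Longrightarrow> open S\<close> by auto
  have sub: "- supp_meas \<sigma> \<subseteq> \<Union>F"
  proof
    fix x assume "x \<in> - supp_meas \<sigma>"
    then obtain e where e: "0 < e" "\<not> emeasure \<sigma> (ball x e) > 0" by (auto simp: supp_meas_def)
    hence "emeasure \<sigma> (ball x e) = 0" by (simp add: not_gr_zero)
    hence "ball x e \<in> F" using e unfolding F_def by blast
    moreover have "x \<in> ball x e" using e by simp
    ultimately show "x \<in> \<Union>F" by blast
  qed
  show ?thesis using U op sub F'(3) by (intro exI[of _ "\<Union>F'"]) auto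
qed

lemma mu_AE:
  fixes \<sigma> :: "real measure"
  assumes s: "sets \<sigma> = sets borel"
  shows "AE z in mu_meas \<sigma>. cmod z = 1 \<or> (Im z = 0 \<and> Re z \<in> supp_meas \<sigma>)"
proof -
  obtain U where U: "U \<in> null_sets \<sigma>" "open U" "- supp_meas \<sigma> \<subseteq> U" using supp_null[OF s] by blast
  define N where "N = - {z::complex. cmod z = 1} \<inter> ({z. Im z \<noteq> 0} \<union> Re -` U)"
  have oN: "open N"
  proof -
    have "closed {z::complex. cmod z = 1}" by (intro closed_Collect_eq continuous_intros)
    moreover have "open {z::complex. Im z \<noteq> 0}" by (intro open_Collect_neq continuous_intros)
    moreover have "open (Re -` U)" using U(2) by (intro open_vimage continuous_intros)
    ultimately show ?thesis unfolding N_def by auto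
  qed
  have Nb: "N \<in> sets (mu_meas \<sigma>)" using oN by (simp add: mu_sets)
  define f where "f = (\<lambda>A. emeasure \<sigma> (complex_of_real -` A)
          + emeasure lborel {\<theta> \<in> {-pi..pi}. cis \<theta> \<in> A} / ennreal pi)"
  have fN: "f N = 0"
  proof -
    have "complex_of_real -` N \<subseteq> U" unfolding N_def by auto
    hence "emeasure \<sigma> (complex_of_real -` N) \<le> emeasure \<sigma> U"
      using U(1) by (intro emeasure_mono) auto
    hence 1: "emeasure \<sigma> (complex_of_real -` N) = 0" using U(1) by auto
    have e: "{\<theta> \<in> {-pi..pi}. cis \<theta> \<in> N} = {}" unfolding N_def by auto
    show ?thesis unfolding f_def e 1 by simp
  qed
  have "emeasure (mu_meas \<sigma>) N = 0"
    unfolding mu_meas_def emeasure_measure_of_conv using fN f_def by simp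
  hence "N \<in> null_sets (mu_meas \<sigma>)" using Nb by (intro null_setsI)
  moreover have "{z \<in> space (mu_meas \<sigma>). \<not> (cmod z = 1 \<or> (Im z = 0 \<and> Re z \<in> supp_meas \<sigma>))} \<subseteq> N"
    unfolding N_def using U(3) by auto
  ultimately show ?thesis by (rule AE_I')
qed

lemma mu_AE_bound:
  fixes \<sigma> :: "real measure"
  assumes s: "sets \<sigma> = sets borel"
    and supp_inv: "\<And>x. x \<in> supp_meas \<sigma> \<Longrightarrow> x \<noteq> 0 \<and> 1 / x \<in> supp_meas \<sigma>"
    and supp_bdd: "\<exists>c. \<forall>x\<in>supp_meas \<sigma>. \<bar>x\<bar> \<le> c \<and> 1 / \<bar>x\<bar> \<le> c"
  shows "\<exists>R\<ge>1. AE z in mu_meas \<sigma>. z \<noteq> 0 \<and> cmod z \<le> R \<and> cmod (1/z) \<le> R"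
proof -
  obtain c where c: "\<forall>x\<in>supp_meas \<sigma>. \<bar>x\<bar> \<le> c \<and> 1 / \<bar>x\<bar> \<le> c" using supp_bdd by blast
  define R where "R = max c 1"
  have "AE z in mu_meas \<sigma>. z \<noteq> 0 \<and> cmod z \<le> R \<and> cmod (1/z) \<le> R"
    using mu_AE[OF s]
  proof eventually_elim
    case (elim z)
    show ?case
    proof (cases "cmod z = 1")
      case True thus ?thesis by (auto simp: R_def norm_divide)
    next
      case False
      hence z: "Im z = 0" "Re z \<in> supp_meas \<sigma>" using elim by auto
      have ze: "z = complex_of_real (Re z)" using z(1) by (simp add: complex_eq_iff)
      have "Re z \<noteq> 0" using supp_inv z(2) by blast
      moreover have "\<bar>Re z\<bar> \<le> c" "1 / \<bar>Re z\<bar> \<le> c" using c z(2) by auto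
      ultimately show ?thesis
        by (subst (1 2 3) ze) (auto simp: R_def norm_divide)
    qed
  qed
  thus ?thesis unfolding R_def by (intro exI[of _ "max c 1"]) auto
qed

lemmas bo_intros = bo_comp bo_add_op bo_diff_op bo_neg_op bo_id

lemma op_eq_of_eq: "S = T \<Longrightarrow> op_eq M S T" by simp

lemma op_eq_cl: assumes "bounded_op M T" "op_eq M S S'" shows "op_eq M (S \<circ>\<^sub>o T) (S' \<circ>\<^sub>o T)"
  using op_eq_comp_left[OF assms(2)] bo_L2[OF assms(1)] by blast

lemma cancel_r:
  assumes "bounded_op M A" "bounded_op M X" "bounded_op M Y" "bounded_op M B" "op_eq M (X \<circ>\<^sub>o Y) id"
  shows "op_eq M (A \<circ>\<^sub>o (X \<circ>\<^sub>o (Y \<circ>\<^sub>o B))) (A \<circ>\<^sub>o B)"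
proof -
  have "op_eq M (A \<circ>\<^sub>o (X \<circ>\<^sub>o (Y \<circ>\<^sub>o B))) (A \<circ>\<^sub>o ((X \<circ>\<^sub>o Y) \<circ>\<^sub>o B))" by (rule op_eq_of_eq) (simp add: comp_assoc)
  also have "op_eq M (A \<circ>\<^sub>o ((X \<circ>\<^sub>o Y) \<circ>\<^sub>o B)) (A \<circ>\<^sub>o (id \<circ>\<^sub>o B))"
    by (rule op_eq_comp_right[OF _ _ _ op_eq_cl[OF assms(4) assms(5)]]; intro bo_intros assms)
  finally show ?thesis by simp
qed

lemma cancel_l:
  assumes "bounded_op M X" "bounded_op M Y" "bounded_op M B" "op_eq M (X \<circ>\<^sub>o Y) id"
  shows "op_eq M (X \<circ>\<^sub>o (Y \<circ>\<^sub>o B)) B"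
proof -
  have "op_eq M (X \<circ>\<^sub>o (Y \<circ>\<^sub>o B)) ((X \<circ>\<^sub>o Y) \<circ>\<^sub>o B)" by (rule op_eq_of_eq) (simp add: comp_assoc)
  also have "op_eq M ((X \<circ>\<^sub>o Y) \<circ>\<^sub>o B) (id \<circ>\<^sub>o B)"
    by (rule op_eq_cl[OF assms(3) assms(4)])
  finally show ?thesis by simp
qed

lemma DH_alg:
  assumes b: "bounded_op M A" "bounded_op M Gm" "bounded_op M G0" "bounded_op M Gp" "bounded_op M Gpp" "bounded_op M m"
    and i2: "op_eq M (A \<circ>\<^sub>o G0) id" and i1: "op_eq M (G0 \<circ>\<^sub>o A) id"
    and r1: "op_eq M Gpp (op_diff (m \<circ>\<^sub>o Gp) G0)" and r2: "op_eq M Gp (op_diff (m \<circ>\<^sub>o G0) Gm)"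
  shows "op_eq M (op_add (op_neg (A \<circ>\<^sub>o Gp \<circ>\<^sub>o A) \<circ>\<^sub>o Gp) (A \<circ>\<^sub>o Gpp)) (op_diff (A \<circ>\<^sub>o Gm \<circ>\<^sub>o A \<circ>\<^sub>o Gp) id)"
proof -
  have a: "op_eq M (A \<circ>\<^sub>o Gpp) (op_diff (A \<circ>\<^sub>o (m \<circ>\<^sub>o Gp)) id)"
  proof -
    have "op_eq M (A \<circ>\<^sub>o Gpp) (A \<circ>\<^sub>o op_diff (m \<circ>\<^sub>o Gp) G0)"
      by (rule op_eq_comp_right[OF _ _ _ r1]; intro bo_intros b)
    also have "op_eq M (A \<circ>\<^sub>o op_diff (m \<circ>\<^sub>o Gp) G0) (op_diff (A \<circ>\<^sub>o (m \<circ>\<^sub>o Gp)) (A \<circ>\<^sub>o G0))"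
      by (rule comp_diff; intro bo_intros b)
    also have "op_eq M (op_diff (A \<circ>\<^sub>o (m \<circ>\<^sub>o Gp)) (A \<circ>\<^sub>o G0)) (op_diff (A \<circ>\<^sub>o (m \<circ>\<^sub>o Gp)) id)"
      by (rule op_eq_diff[OF op_eq_refl i2])
    finally show ?thesis .
  qed
  have bb: "op_eq M (Gp \<circ>\<^sub>o A) (op_diff m (Gm \<circ>\<^sub>o A))"
  proof -
    have "op_eq M (Gp \<circ>\<^sub>o A) (op_diff (m \<circ>\<^sub>o G0) Gm \<circ>\<^sub>o A)"
      by (rule op_eq_cl[OF b(1) r2])
    also have "op_eq M (op_diff (m \<circ>\<^sub>o G0) Gm \<circ>\<^sub>o A) (op_diff (m \<circ>\<^sub>o (G0 \<circ>\<^sub>o A)) (Gm \<circ>\<^sub>o A))"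
      by (rule op_eq_of_eq) (simp add: diff_comp comp_assoc)
    also have "op_eq M (op_diff (m \<circ>\<^sub>o (G0 \<circ>\<^sub>o A)) (Gm \<circ>\<^sub>o A)) (op_diff (m \<circ>\<^sub>o id) (Gm \<circ>\<^sub>o A))"
      by (rule op_eq_diff[OF op_eq_comp_right op_eq_refl]; intro bo_intros b i1)
    finally show ?thesis by simp
  qed
  have c: "op_eq M (A \<circ>\<^sub>o Gp \<circ>\<^sub>o A \<circ>\<^sub>o Gp) (op_diff (A \<circ>\<^sub>o (m \<circ>\<^sub>o Gp)) (A \<circ>\<^sub>o Gm \<circ>\<^sub>o A \<circ>\<^sub>o Gp))"
  proof -
    have "op_eq M (A \<circ>\<^sub>o Gp \<circ>\<^sub>o A \<circ>\<^sub>o Gp) ((A \<circ>\<^sub>o (Gp \<circ>\<^sub>o A)) \<circ>\<^sub>o Gp)" by (rule op_eq_of_eq) (simp add: comp_assoc)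
    also have "op_eq M ((A \<circ>\<^sub>o (Gp \<circ>\<^sub>o A)) \<circ>\<^sub>o Gp) ((A \<circ>\<^sub>o op_diff m (Gm \<circ>\<^sub>o A)) \<circ>\<^sub>o Gp)"
      by (rule op_eq_cl[OF b(4) op_eq_comp_right[OF _ _ _ bb]]; intro bo_intros b)
    also have "op_eq M ((A \<circ>\<^sub>o op_diff m (Gm \<circ>\<^sub>o A)) \<circ>\<^sub>o Gp) (op_diff (A \<circ>\<^sub>o m) (A \<circ>\<^sub>o (Gm \<circ>\<^sub>o A)) \<circ>\<^sub>o Gp)"
      by (rule op_eq_cl[OF b(4) comp_diff]; intro bo_intros b)
    also have "op_eq M (op_diff (A \<circ>\<^sub>o m) (A \<circ>\<^sub>o (Gm \<circ>\<^sub>o A)) \<circ>\<^sub>o Gp) (op_diff (A \<circ>\<^sub>o (m \<circ>\<^sub>o Gp)) (A \<circ>\<^sub>o Gm \<circ>\<^sub>o A \<circ>\<^sub>o Gp))"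
      by (rule op_eq_of_eq) (simp add: diff_comp comp_assoc)
    finally show ?thesis .
  qed
  have "op_eq M (op_add (op_neg (A \<circ>\<^sub>o Gp \<circ>\<^sub>o A) \<circ>\<^sub>o Gp) (A \<circ>\<^sub>o Gpp)) (op_add (op_neg (A \<circ>\<^sub>o Gp \<circ>\<^sub>o A \<circ>\<^sub>o Gp)) (A \<circ>\<^sub>o Gpp))"
    by (rule op_eq_of_eq) (simp add: neg_comp)
  also have "op_eq M \<dots> (op_add (op_neg (op_diff (A \<circ>\<^sub>o (m \<circ>\<^sub>o Gp)) (A \<circ>\<^sub>o Gm \<circ>\<^sub>o A \<circ>\<^sub>o Gp))) (op_diff (A \<circ>\<^sub>o (m \<circ>\<^sub>o Gp)) id))"
    by (rule op_eq_add[OF op_eq_neg[OF c] a])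
  also have "op_eq M (op_add (op_neg (op_diff (A \<circ>\<^sub>o (m \<circ>\<^sub>o Gp)) (A \<circ>\<^sub>o Gm \<circ>\<^sub>o A \<circ>\<^sub>o Gp))) (op_diff (A \<circ>\<^sub>o (m \<circ>\<^sub>o Gp)) id))
      (op_diff (A \<circ>\<^sub>o Gm \<circ>\<^sub>o A \<circ>\<^sub>o Gp) id)"
    by (rule op_eq_of_eq) (simp add: op_add_def op_neg_def op_diff_def fun_eq_iff)
  finally show ?thesis .
qed

lemma Phi_alg:
  assumes b: "bounded_op M A0" "bounded_op M A1" "bounded_op M G0" "bounded_op M G1" "bounded_op M G2"
    and i0: "op_eq M (G0 \<circ>\<^sub>o A0) id" and i1: "op_eq M (A1 \<circ>\<^sub>o G1) id"
  shows "op_eq M ((A1 \<circ>\<^sub>o G0) \<circ>\<^sub>o op_add (op_neg (A0 \<circ>\<^sub>o G1 \<circ>\<^sub>o A0) \<circ>\<^sub>o G1) (A0 \<circ>\<^sub>o G2))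
                 (op_diff (A1 \<circ>\<^sub>o G2) (A0 \<circ>\<^sub>o G1))"
proof -
  have "op_eq M ((A1 \<circ>\<^sub>o G0) \<circ>\<^sub>o op_add (op_neg (A0 \<circ>\<^sub>o G1 \<circ>\<^sub>o A0) \<circ>\<^sub>o G1) (A0 \<circ>\<^sub>o G2))
      (op_add ((A1 \<circ>\<^sub>o G0) \<circ>\<^sub>o (op_neg (A0 \<circ>\<^sub>o G1 \<circ>\<^sub>o A0) \<circ>\<^sub>o G1)) ((A1 \<circ>\<^sub>o G0) \<circ>\<^sub>o (A0 \<circ>\<^sub>o G2)))"
    by (rule comp_add; intro bo_intros b)
  also have "op_eq M (op_add ((A1 \<circ>\<^sub>o G0) \<circ>\<^sub>o (op_neg (A0 \<circ>\<^sub>o G1 \<circ>\<^sub>o A0) \<circ>\<^sub>o G1)) ((A1 \<circ>\<^sub>o G0) \<circ>\<^sub>o (A0 \<circ>\<^sub>o G2)))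
     (op_add ((A1 \<circ>\<^sub>o G0) \<circ>\<^sub>o op_neg (A0 \<circ>\<^sub>o (G1 \<circ>\<^sub>o (A0 \<circ>\<^sub>o G1)))) ((A1 \<circ>\<^sub>o G0) \<circ>\<^sub>o (A0 \<circ>\<^sub>o G2)))"
    by (rule op_eq_of_eq) (simp add: neg_comp comp_assoc)
  also have "op_eq M (op_add ((A1 \<circ>\<^sub>o G0) \<circ>\<^sub>o op_neg (A0 \<circ>\<^sub>o (G1 \<circ>\<^sub>o (A0 \<circ>\<^sub>o G1)))) ((A1 \<circ>\<^sub>o G0) \<circ>\<^sub>o (A0 \<circ>\<^sub>o G2)))
     (op_add (op_neg (A0 \<circ>\<^sub>o G1)) (A1 \<circ>\<^sub>o G2))"
  proof (rule op_eq_add)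
    have "op_eq M ((A1 \<circ>\<^sub>o G0) \<circ>\<^sub>o op_neg (A0 \<circ>\<^sub>o (G1 \<circ>\<^sub>o (A0 \<circ>\<^sub>o G1)))) (op_neg ((A1 \<circ>\<^sub>o G0) \<circ>\<^sub>o (A0 \<circ>\<^sub>o (G1 \<circ>\<^sub>o (A0 \<circ>\<^sub>o G1)))))"
      by (rule comp_neg; intro bo_intros b)
    also have "op_eq M (op_neg ((A1 \<circ>\<^sub>o G0) \<circ>\<^sub>o (A0 \<circ>\<^sub>o (G1 \<circ>\<^sub>o (A0 \<circ>\<^sub>o G1))))) (op_neg (A1 \<circ>\<^sub>o (G0 \<circ>\<^sub>o (A0 \<circ>\<^sub>o (G1 \<circ>\<^sub>o (A0 \<circ>\<^sub>o G1))))))"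
      by (rule op_eq_of_eq) (simp add: comp_assoc)
    also have "op_eq M (op_neg (A1 \<circ>\<^sub>o (G0 \<circ>\<^sub>o (A0 \<circ>\<^sub>o (G1 \<circ>\<^sub>o (A0 \<circ>\<^sub>o G1)))))) (op_neg (A1 \<circ>\<^sub>o (G1 \<circ>\<^sub>o (A0 \<circ>\<^sub>o G1))))"
      by (rule op_eq_neg[OF cancel_r]; intro bo_intros b i0)
    also have "op_eq M (op_neg (A1 \<circ>\<^sub>o (G1 \<circ>\<^sub>o (A0 \<circ>\<^sub>o G1)))) (op_neg (A0 \<circ>\<^sub>o G1))"
      by (rule op_eq_neg[OF cancel_l]; intro bo_intros b i1)
    finally show "op_eq M ((A1 \<circ>\<^sub>o G0) \<circ>\<^sub>o op_neg (A0 \<circ>\<^sub>o (G1 \<circ>\<^sub>o (A0 \<circ>\<^sub>o G1)))) (op_neg (A0 \<circ>\<^sub>o G1))" .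
  next
    have "op_eq M ((A1 \<circ>\<^sub>o G0) \<circ>\<^sub>o (A0 \<circ>\<^sub>o G2)) (A1 \<circ>\<^sub>o (G0 \<circ>\<^sub>o (A0 \<circ>\<^sub>o G2)))" by (rule op_eq_of_eq) (simp add: comp_assoc)
    also have "op_eq M (A1 \<circ>\<^sub>o (G0 \<circ>\<^sub>o (A0 \<circ>\<^sub>o G2))) (A1 \<circ>\<^sub>o G2)"
      by (rule cancel_r; intro bo_intros b i0)
    finally show "op_eq M ((A1 \<circ>\<^sub>o G0) \<circ>\<^sub>o (A0 \<circ>\<^sub>o G2)) (A1 \<circ>\<^sub>o G2)" .
  qed
  also have "op_eq M (op_add (op_neg (A0 \<circ>\<^sub>o G1)) (A1 \<circ>\<^sub>o G2)) (op_diff (A1 \<circ>\<^sub>o G2) (A0 \<circ>\<^sub>o G1))"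
    by (rule op_eq_of_eq) (simp add: op_add_def op_neg_def op_diff_def fun_eq_iff)
  finally show ?thesis .
qed

lemma bo_mult:
  assumes f: "f \<in> borel_measurable M" and b: "AE x in M. cmod (f x) \<le> K"
  shows "bounded_op M (mult_op f)"
proof (rule bo_intro[where K="K^2"])
  fix u assume u: "u \<in> L2 M"
  show "mult_op f u \<in> L2 M" using mult_L2(1)[OF f b u] by (simp add: mult_op_def)
  show "nl M (mult_op f u) \<le> K^2 * nl M u" using mult_L2(2)[OF f b u] by (simp add: mult_op_def)
next
  fix u v c
  show "AE x in M. mult_op f (\<lambda>y. u y + c * v y) x = mult_op f u x + c * mult_op f v x"
    by (simp add: mult_op_def algebra_simps)
qed simp

lemma main_abstract:
  fixes G :: "int \<Rightarrow> real \<Rightarrow> op" and g :: "int \<Rightarrow> real \<Rightarrow> op" and m :: op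
  assumes IG: "\<And>k t. op_invertible M (G k t)"
    and GD: "\<And>k t. has_op_deriv M (G k) (G (k+1) t) t"
    and bm: "bounded_op M m"
    and rec: "\<And>j t. op_eq M (G (j+1+1) t) (op_diff (m \<circ>\<^sub>o G (j+1) t) (G j t))"
    and gdef: "\<And>k t. g k t = op_inv M (G k t) \<circ>\<^sub>o op_deriv M (G k) t"
  shows "\<forall>k t. op_invertible M (g k t)
     \<and> has_op_deriv M (g k) (op_deriv M (g k) t) t
     \<and> (\<exists>D. has_op_deriv M (\<lambda>t'. op_inv M (g k t') \<circ>\<^sub>o op_deriv M (g k) t') D t
          \<and> op_eq M D (op_diff (op_inv M (g k t) \<circ>\<^sub>o g (k + 1) t) (op_inv M (g (k - 1) t) \<circ>\<^sub>o g k t)))"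
proof -
  have BG: "\<And>k t. bounded_op M (G k t)" using inv_bo IG by blast
  define I where "I k t = op_inv M (G k t)" for k t
  have BI: "\<And>k t. bounded_op M (I k t)" unfolding I_def using inv_props(1) IG by blast
  have IL: "\<And>k t. op_eq M (I k t \<circ>\<^sub>o G k t) id" unfolding I_def using inv_props(2) IG by blast
  have IR: "\<And>k t. op_eq M (G k t \<circ>\<^sub>o I k t) id" unfolding I_def using inv_props(3) IG by blast
  have OD: "has_op_deriv M (G k) (op_deriv M (G k) t) t" for k t
    unfolding op_deriv_def by (rule someI[where P="\<lambda>D. has_op_deriv M (G k) D t", OF GD])
  have BOD: "\<And>k t. bounded_op M (op_deriv M (G k) t)" using OD by (simp add: hod_iff)
  have ODe: "op_eq M (op_deriv M (G k) t) (G (k+1) t)" for k t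
    by (rule hod_unique[where F="G k"]) (rule BG OD GD)+
  define H where "H k t = I k t \<circ>\<^sub>o G (k+1) t" for k t
  have BH: "\<And>k t. bounded_op M (H k t)" unfolding H_def by (intro bo_comp BI BG)
  have g2: "\<And>k t. g k t = I k t \<circ>\<^sub>o op_deriv M (G k) t" by (simp add: gdef I_def)
  have gH: "op_eq M (g k t) (H k t)" for k t
    unfolding g2 H_def by (rule op_eq_comp_right[OF BI BOD BG ODe])
  have Bg: "\<And>k t. bounded_op M (g k t)" unfolding g2 by (intro bo_comp BI BOD)
  define DH where "DH k t = op_add (op_neg (I k t \<circ>\<^sub>o G (k+1) t \<circ>\<^sub>o I k t) \<circ>\<^sub>o G (k+1) t) (I k t \<circ>\<^sub>o G (k+1+1) t)" for k t
  have BDH: "\<And>k t. bounded_op M (DH k t)" unfolding DH_def by (intro bo_intros BI BG)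
  have dH: "has_op_deriv M (H k) (DH k t) t" for k t
  proof -
    have dI: "has_op_deriv M (I k) (op_neg (I k t \<circ>\<^sub>o G (k+1) t \<circ>\<^sub>o I k t)) t"
      unfolding I_def by (rule hod_inv[where F="G k", OF IG GD])
    show ?thesis unfolding H_def DH_def
      by (rule hod_comp[where F="I k" and G="G (k+1)", OF BI BG dI GD])
  qed
  have dg: "has_op_deriv M (g k) (DH k t) t" for k t
    by (rule hod_transfer[OF dH _ op_eq_refl BDH]) (rule op_eq_sym[OF gH])
  have Odg: "has_op_deriv M (g k) (op_deriv M (g k) t) t" for k t
    unfolding op_deriv_def by (rule someI[where P="\<lambda>D. has_op_deriv M (g k) D t", OF dg])
  have Odge: "op_eq M (op_deriv M (g k) t) (DH k t)" for k t
    by (rule hod_unique[where F="g k"]) (rule Bg Odg dg)+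
  have BOdg: "\<And>k t. bounded_op M (op_deriv M (g k) t)" using Odg by (simp add: hod_iff)
  define S where "S k t = I (k+1) t \<circ>\<^sub>o G k t" for k t
  have BS: "\<And>k t. bounded_op M (S k t)" unfolding S_def by (intro bo_comp BI BG)
  have Sg: "op_eq M (S k t \<circ>\<^sub>o g k t) id" for k t
  proof -
    have "op_eq M (S k t \<circ>\<^sub>o g k t) (S k t \<circ>\<^sub>o H k t)" by (rule op_eq_comp_right[OF BS Bg BH gH])
    also have "op_eq M (S k t \<circ>\<^sub>o H k t) (I (k+1) t \<circ>\<^sub>o (G k t \<circ>\<^sub>o (I k t \<circ>\<^sub>o G (k+1) t)))"
      by (rule op_eq_of_eq) (simp add: S_def H_def comp_assoc)
    also have "op_eq M (I (k+1) t \<circ>\<^sub>o (G k t \<circ>\<^sub>o (I k t \<circ>\<^sub>o G (k+1) t))) (I (k+1) t \<circ>\<^sub>o G (k+1) t)"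
      by (rule cancel_r[OF BI BG BI BG IR])
    also have "op_eq M (I (k+1) t \<circ>\<^sub>o G (k+1) t) id" by (rule IL)
    finally show ?thesis .
  qed
  have gS: "op_eq M (g k t \<circ>\<^sub>o S k t) id" for k t
  proof -
    have "op_eq M (g k t \<circ>\<^sub>o S k t) (H k t \<circ>\<^sub>o S k t)" by (rule op_eq_cl[OF BS gH])
    also have "op_eq M (H k t \<circ>\<^sub>o S k t) (I k t \<circ>\<^sub>o (G (k+1) t \<circ>\<^sub>o (I (k+1) t \<circ>\<^sub>o G k t)))"
      by (rule op_eq_of_eq) (simp add: S_def H_def comp_assoc)
    also have "op_eq M (I k t \<circ>\<^sub>o (G (k+1) t \<circ>\<^sub>o (I (k+1) t \<circ>\<^sub>o G k t))) (I k t \<circ>\<^sub>o G k t)"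
      by (rule cancel_r[OF BI BG BI BG IR])
    also have "op_eq M (I k t \<circ>\<^sub>o G k t) id" by (rule IL)
    finally show ?thesis .
  qed
  have ginv: "\<And>k t. op_invertible M (g k t)" by (rule invertible_intro[OF Bg BS Sg gS])
  have ginve: "\<And>k t. op_eq M (op_inv M (g k t)) (S k t)" by (rule inv_unique[OF ginv BS Sg])
  have Binvg: "\<And>k t. bounded_op M (op_inv M (g k t))" by (rule inv_props(1)[OF ginv])
  show ?thesis
  proof (intro allI conjI)
    fix k t
    show "op_invertible M (g k t)" by (rule ginv)
    show "has_op_deriv M (g k) (op_deriv M (g k) t) t" by (rule Odg)
    define D where "D = op_diff (DH (k+1) t) (DH k t)"
    have PhiE: "op_eq M (op_diff (H (k+1) s) (H k s)) (op_inv M (g k s) \<circ>\<^sub>o op_deriv M (g k) s)" for s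
    proof -
      have "op_eq M (op_inv M (g k s) \<circ>\<^sub>o op_deriv M (g k) s) (S k s \<circ>\<^sub>o DH k s)"
        by (rule op_eq_comp[OF Binvg BS BOdg BDH ginve Odge])
      also have "op_eq M (S k s \<circ>\<^sub>o DH k s) (op_diff (H (k+1) s) (H k s))"
        unfolding S_def DH_def H_def
        by (rule Phi_alg) (rule BI BG IR IL)+
      finally show ?thesis by (rule op_eq_sym)
    qed
    have dPhi: "has_op_deriv M (\<lambda>s. op_diff (H (k+1) s) (H k s)) D t" unfolding D_def
      by (rule hod_diff[where F="H (k+1)" and G="H k"]) (rule BH dH)+
    have BD: "bounded_op M D" unfolding D_def by (intro bo_intros BDH)
    have dP: "has_op_deriv M (\<lambda>t'. op_inv M (g k t') \<circ>\<^sub>o op_deriv M (g k) t') D t"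
      by (rule hod_transfer[OF dPhi PhiE op_eq_refl BD])
    define T1 where "T1 = I (k+1) t \<circ>\<^sub>o G k t \<circ>\<^sub>o I (k+1) t \<circ>\<^sub>o G (k+1+1) t"
    define T2 where "T2 = I k t \<circ>\<^sub>o G (k-1) t \<circ>\<^sub>o I k t \<circ>\<^sub>o G (k+1) t"
    have e1: "op_eq M (DH (k+1) t) (op_diff T1 id)"
      unfolding DH_def T1_def
      by (rule DH_alg[OF BI BG BG BG BG bm IL IR rec rec])
    have rec': "op_eq M (G (k+1) t) (op_diff (m \<circ>\<^sub>o G k t) (G (k-1) t))"
      using rec[of "k-1" t] by simp
    have e2: "op_eq M (DH k t) (op_diff T2 id)"
      unfolding DH_def T2_def
      by (rule DH_alg[OF BI BG BG BG BG bm IL IR rec rec'])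
    have "op_eq M D (op_diff (op_diff T1 id) (op_diff T2 id))" unfolding D_def by (rule op_eq_diff[OF e1 e2])
    also have "op_eq M (op_diff (op_diff T1 id) (op_diff T2 id)) (op_diff T1 T2)"
      by (rule op_eq_of_eq) (simp add: op_diff_def fun_eq_iff)
    also have "op_eq M (op_diff T1 T2) (op_diff (op_inv M (g k t) \<circ>\<^sub>o g (k + 1) t) (op_inv M (g (k - 1) t) \<circ>\<^sub>o g k t))"
    proof (rule op_eq_diff)
      have "op_eq M (op_inv M (g k t) \<circ>\<^sub>o g (k+1) t) (S k t \<circ>\<^sub>o H (k+1) t)"
        by (rule op_eq_comp[OF Binvg BS Bg BH ginve gH])
      moreover have "S k t \<circ>\<^sub>o H (k+1) t = T1" by (simp add: S_def H_def T1_def comp_assoc)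
      ultimately show "op_eq M T1 (op_inv M (g k t) \<circ>\<^sub>o g (k + 1) t)" using op_eq_sym by metis
    next
      have "op_eq M (op_inv M (g (k-1) t) \<circ>\<^sub>o g k t) (S (k-1) t \<circ>\<^sub>o H k t)"
        by (rule op_eq_comp[OF Binvg BS Bg BH ginve gH])
      moreover have "S (k-1) t \<circ>\<^sub>o H k t = T2" by (simp add: S_def H_def T2_def comp_assoc)
      ultimately show "op_eq M T2 (op_inv M (g (k - 1) t) \<circ>\<^sub>o g k t)" using op_eq_sym by metis
    qed
    finally have DE: "op_eq M D (op_diff (op_inv M (g k t) \<circ>\<^sub>o g (k + 1) t) (op_inv M (g (k - 1) t) \<circ>\<^sub>o g k t))" .
    show "\<exists>D. has_op_deriv M (\<lambda>t'. op_inv M (g k t') \<circ>\<^sub>o op_deriv M (g k) t') D t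
          \<and> op_eq M D (op_diff (op_inv M (g k t) \<circ>\<^sub>o g (k + 1) t) (op_inv M (g (k - 1) t) \<circ>\<^sub>o g k t))"
      using dP DE by blast
  qed
qed

lemma Gam_rec:
  assumes AE0: "AE z in M. z \<noteq> 0"
  shows "op_eq M (Gam \<sigma> s \<rho> rh (j+1+1) t) (op_diff (mult_op (\<lambda>\<beta>. \<beta> + 1/\<beta>) \<circ>\<^sub>o Gam \<sigma> s \<rho> rh (j+1) t) (Gam \<sigma> s \<rho> rh j t))"
  unfolding op_eq_def
proof
  fix u assume u: "u \<in> L2 M"
  show "AE x in M. Gam \<sigma> s \<rho> rh (j+1+1) t u x = op_diff (mult_op (\<lambda>\<beta>. \<beta> + 1/\<beta>) \<circ>\<^sub>o Gam \<sigma> s \<rho> rh (j+1) t) (Gam \<sigma> s \<rho> rh j t) u x"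
    using AE0
  proof eventually_elim
    case (elim x)
    define a where "a = x powi (j+2)"
    define b where "b = x powi (- (j+1+1))"
    have p1: "x powi (j+1+1+2) = a * x * x"
    proof -
      have "x powi (j+1+1+2) = x powi ((j+2)+1+1)" by (simp add: ac_simps)
      also have "\<dots> = a * x * x" unfolding a_def by (simp only: power_int_add_1[OF disjI1[OF elim]])
      finally show ?thesis .
    qed
    have p2: "x powi (j+1+2) = a * x"
    proof -
      have "x powi (j+1+2) = x powi ((j+2)+1)" by (simp add: ac_simps)
      also have "\<dots> = a * x" unfolding a_def by (simp only: power_int_add_1[OF disjI1[OF elim]])
      finally show ?thesis .
    qed
    have p3: "x powi (- (j+1)) = b * x"
    proof -
      have "x powi (- (j+1)) = x powi ((- (j+1+1))+1)" by (simp add: ac_simps)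
      also have "\<dots> = b * x" unfolding b_def by (simp only: power_int_add_1[OF disjI1[OF elim]])
      finally show ?thesis .
    qed
    have p4: "x powi (- j) = b * x * x"
    proof -
      have "x powi (- j) = x powi ((- (j+1+1))+1+1)" by (simp add: ac_simps)
      also have "\<dots> = b * x * x" unfolding b_def by (simp only: power_int_add_1[OF disjI1[OF elim]])
      finally show ?thesis .
    qed
    have p5: "x powi (j+2) = a" by (simp add: a_def)
    have p6: "x powi (- (j+1+1)) = b" by (simp add: b_def)
    show ?case
      unfolding Gam_def mult_op_def op_comp_def op_diff_def p1 p2 p3 p4 p5 p6
      using elim by (simp add: field_simps)
  qed
qed

theorem lemma1:
  fixes \<sigma> :: "real measure"
    and \<rho> rh :: "complex \<Rightarrow> complex"
    and s :: "real \<Rightarrow> real"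
  defines "\<mu> \<equiv> mu_meas \<sigma>"
  assumes sigma_borel: "sets \<sigma> = sets borel"
    and sigma_zero: "emeasure \<sigma> {0} = 0"
    and supp_inv: "\<And>x. x \<in> supp_meas \<sigma> \<Longrightarrow> x \<noteq> 0 \<and> 1 / x \<in> supp_meas \<sigma>"
    and supp_bdd: "\<exists>c. \<forall>x\<in>supp_meas \<sigma>. \<bar>x\<bar> \<le> c \<and> 1 / \<bar>x\<bar> \<le> c"
    and s_gt: "\<And>a. \<bar>a\<bar> > 1 \<Longrightarrow> s a = 1"
    and s_lt: "\<And>a. \<bar>a\<bar> < 1 \<Longrightarrow> s a = -1"
    and C2_def: "\<And>u. u \<in> L2 \<mu> \<Longrightarrow> AE \<beta> in \<mu>. vp_exists \<sigma> s rh u \<beta>"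
    and C2_bdd: "bounded_op \<mu> (C2 \<sigma> s \<rho> rh)"
    and Gam_inv: "\<And>k t. op_invertible \<mu> (Gam \<sigma> s \<rho> rh k t)"
  shows "\<forall>k t. op_invertible \<mu> (gam \<sigma> s \<rho> rh k t)
     \<and> has_op_deriv \<mu> (gam \<sigma> s \<rho> rh k) (op_deriv \<mu> (gam \<sigma> s \<rho> rh k) t) t
     \<and> (\<exists>D. has_op_deriv \<mu>
              (\<lambda>t'. op_inv \<mu> (gam \<sigma> s \<rho> rh k t') \<circ>\<^sub>o op_deriv \<mu> (gam \<sigma> s \<rho> rh k) t') D t
          \<and> op_eq \<mu> D
              (op_diff (op_inv \<mu> (gam \<sigma> s \<rho> rh k t) \<circ>\<^sub>o gam \<sigma> s \<rho> rh (k + 1) t)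
                       (op_inv \<mu> (gam \<sigma> s \<rho> rh (k - 1) t) \<circ>\<^sub>o gam \<sigma> s \<rho> rh k t)))"
  proof -
  have sM: "sets \<mu> = sets borel" unfolding \<mu>_def by (rule mu_sets)
  obtain R where R: "1 \<le> R" and AEb: "AE z in \<mu>. z \<noteq> 0 \<and> cmod z \<le> R \<and> cmod (1/z) \<le> R"
    using mu_AE_bound[OF sigma_borel supp_inv supp_bdd] unfolding \<mu>_def by blast
  have AE0: "AE z in \<mu>. z \<noteq> 0" using AEb by eventually_elim simp
  have bm: "bounded_op \<mu> (mult_op (\<lambda>\<beta>. \<beta> + 1/\<beta>))"
  proof (rule bo_mult[where K="2 * R"])
    have "(\<lambda>\<beta>::complex. \<beta> + 1/\<beta>) \<in> borel_measurable borel" by measurable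
    thus "(\<lambda>\<beta>::complex. \<beta> + 1/\<beta>) \<in> borel_measurable \<mu>" by (subst measurable_cong_sets[OF sM refl])
    show "AE x in \<mu>. cmod (x + 1/x) \<le> 2 * R" using AEb
    proof eventually_elim
      case (elim x)
      have "cmod (x + 1/x) \<le> cmod x + cmod (1/x)" by (rule norm_triangle_ineq)
      thus ?case using elim by linarith
    qed
  qed
  have BG: "\<And>k t. bounded_op \<mu> (Gam \<sigma> s \<rho> rh k t)" using inv_bo[OF Gam_inv] by blast
  have GD: "\<And>k t. has_op_deriv \<mu> (Gam \<sigma> s \<rho> rh k) (Gam \<sigma> s \<rho> rh (k+1) t) t"
    by (rule G_deriv[where G="Gam \<sigma> s \<rho> rh" and C="C2 \<sigma> s \<rho> rh", OF sM AEb R C2_bdd BG])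
       (simp add: Gam_def)
  have rec: "\<And>j t. op_eq \<mu> (Gam \<sigma> s \<rho> rh (j+1+1) t) (op_diff (mult_op (\<lambda>\<beta>. \<beta> + 1/\<beta>) \<circ>\<^sub>o Gam \<sigma> s \<rho> rh (j+1) t) (Gam \<sigma> s \<rho> rh j t))"
    by (rule Gam_rec[OF AE0])
  have gdef: "\<And>k t. gam \<sigma> s \<rho> rh k t = op_inv \<mu> (Gam \<sigma> s \<rho> rh k t) \<circ>\<^sub>o op_deriv \<mu> (Gam \<sigma> s \<rho> rh k) t"
    by (simp add: gam_def \<mu>_def)
  show ?thesis by (rule main_abstract[where G="Gam \<sigma> s \<rho> rh" and g="gam \<sigma> s \<rho> rh" and M=\<mu> and m="mult_op (\<lambda>\<beta>. \<beta> + 1/\<beta>)", OF Gam_inv GD bm rec gdef])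
qed

end
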